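(* Let $(E,(\cdot,\cdot),\mathcal H)$ be an extended affine Lie algebra with root system $R$, let $R'$ be a closed subsystem of $R$ and let $\mathcal H'$ be a cover of $R'$. Then the Lie cover $E_{R',\mathcal H'}$ (with the bracket and form of $E$) is an extended affine Lie algebra with Cartan subalgebra $\mathcal H'$ and root system $R'$ (each $\alpha\in R'$ identified with its restriction to $\mathcal H'$). In particular, $E_{R',\mathcal H}$ is an extended affine Lie algebra with root system $R'$.
   Context: All Lie algebras are over $\mathbb C$. An extended affine Lie algebra (EALA) is a triple $(E,(\cdot,\cdot),\mathcal H)$ where $E$ is a Lie algebra, $\mathcal H$ a subalgebra and $(\cdot,\cdot)$ a bilinear form on $E$ such that: (EA1) symmetric, non-degenerate, invariant form; (EA2) $\mathcal H$ finite-dimensional, $E=\bigoplus_{\alpha\in\mathcal H^*}E_\alpha$, $E_\alpha=\{x:[h,x]=\alpha(h)x\ \forall h\in\mathcal H\}$, $E_0=\mathcal H$; root system $R=\{\alpha:E_\alpha\ne0\}$; $t_\alpha\in\mathcal H$ given by $\alpha(h)=(h,t_\alpha)$, $(\alpha,\beta):=(t_\alpha,t_\beta)$, $R^\times=\{\alpha\in R:(\alpha,\alpha)\neq0\}$, $R^0=R\setminus R^\times$; (EA3) $\mathrm{ad}\,x$ locally nilpotent for $x\in E_\alpha$, $\alpha\in R^\times$; (EA4) $R$ discrete; (EA5) $R^\times$ connected (not a union of two nonempty mutually orthogonal subsets) and every $\sigma\in R^0$ non-isolated ($\alpha+\sigma\in R$ for some $\alpha\in R^\times$). Throughout the finite root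 system obtained from $R$ modulo $\mathrm{span}_{\mathbb R}R^0$ is assumed reduced. Extended affine root system (EARS): a triple $(R,(\cdot,\cdot),\mathcal V)$, $\mathcal V$ finite-dimensional real, form symmetric positive semidefinite, $R\subseteq\mathcal V$ with: $0\in R$; $R=-R$; $R$ spans $\mathcal V$; $\alpha\in R^\times\Rightarrow2\alpha\notin R$; $R$ discrete; root string property (for $\alpha\in R^\times,\beta\in R$ there are integers $d,u\ge0$ with $(\beta+\mathbb Z\alpha)\cap R=\{\beta-d\alpha,\dots,\beta+u\alpha\}$ and $2(\beta,\alpha)/(\alpha,\alpha)=d-u$); isotropic roots non-isolated; $R^\times$ connected. A subsystem of $R$ is $R'\subseteq R$ with $(R',(\cdot,\cdot)|,\mathrm{span}_{\mathbb R}R')$ an EARS; it is closed if $\alpha,\beta\in R'$, $\alpha+\beta\in R$ imply $\alpha+\beta\in R'$. A cover of a closed subsystem $R'$ is a subspace $\mathcal H'\subseteq\mathcal H$ with $t_\alpha\in\mathcal H'$ for all $\alpha\in R'^\times$ such that the form restricted to $\mathcal H'$ is non-degenerate. The Lie cover is $E_{R',\mathcal H'}:=\mathcal H'\oplus\sum_{\alpha\in R'\setminus\{0\}}E_\alpha$. *)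

theory Defs
  imports Complex_Main
begin

text \<open>Linear functionals on a
subspace H are represented by functions 'v => complex that are linear on H and
vanish outside H (a canonical representative of an element of the dual of H).\<close>

definition lie_algebra :: "(complex \<Rightarrow> 'v::ab_group_add \<Rightarrow> 'v) \<Rightarrow> 'v set \<Rightarrow> ('v \<Rightarrow> 'v \<Rightarrow> 'v) \<Rightarrow> bool" where
  "lie_algebra sc L br \<longleftrightarrow>
     module.subspace sc L \<and>
     (\<forall>x\<in>L. \<forall>y\<in>L. br x y \<in> L) \<and>
     (\<forall>x\<in>L. \<forall>y\<in>L. \<forall>z\<in>L. br (x + y) z = br x z + br y z \<and> br z (x + y) = br z x + br z y) \<and>
     (\<forall>c. \<forall>x\<in>L. \<forall>y\<in>L. br (sc c x) y = sc c (br x y) \<and> br x (sc c y) = sc c (br x y)) \<and>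
     (\<forall>x\<in>L. br x x = 0) \<and>
     (\<forall>x\<in>L. \<forall>y\<in>L. \<forall>z\<in>L. br x (br y z) + br y (br z x) + br z (br x y) = 0)"

definition ea1_form :: "(complex \<Rightarrow> 'v::ab_group_add \<Rightarrow> 'v) \<Rightarrow> 'v set \<Rightarrow> ('v \<Rightarrow> 'v \<Rightarrow> 'v) \<Rightarrow> ('v \<Rightarrow> 'v \<Rightarrow> complex) \<Rightarrow> bool" where
  "ea1_form sc L br B \<longleftrightarrow>
     (\<forall>x\<in>L. \<forall>y\<in>L. \<forall>z\<in>L. B (x + y) z = B x z + B y z) \<and>
     (\<forall>c. \<forall>x\<in>L. \<forall>y\<in>L. B (sc c x) y = c * B x y) \<and>
     (\<forall>x\<in>L. \<forall>y\<in>L. B x y = B y x) \<and>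
     (\<forall>x\<in>L. (\<forall>y\<in>L. B x y = 0) \<longrightarrow> x = 0) \<and>
     (\<forall>x\<in>L. \<forall>y\<in>L. \<forall>z\<in>L. B (br x y) z = B x (br y z))"

definition hdual :: "(complex \<Rightarrow> 'v::ab_group_add \<Rightarrow> 'v) \<Rightarrow> 'v set \<Rightarrow> ('v \<Rightarrow> complex) set" where
  "hdual sc H = {\<alpha>. (\<forall>x\<in>H. \<forall>y\<in>H. \<alpha> (x + y) = \<alpha> x + \<alpha> y) \<and>
                     (\<forall>c. \<forall>x\<in>H. \<alpha> (sc c x) = c * \<alpha> x) \<and>
                     (\<forall>x. x \<notin> H \<longrightarrow> \<alpha> x = 0)}"

definition restr :: "'v set \<Rightarrow> ('v \<Rightarrow> complex) \<Rightarrow> ('v \<Rightarrow> complex)" where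
  "restr H' \<alpha> = (\<lambda>x. if x \<in> H' then \<alpha> x else 0)"

definition rootsp :: "(complex \<Rightarrow> 'v::ab_group_add \<Rightarrow> 'v) \<Rightarrow> 'v set \<Rightarrow> ('v \<Rightarrow> 'v \<Rightarrow> 'v) \<Rightarrow> 'v set \<Rightarrow> ('v \<Rightarrow> complex) \<Rightarrow> 'v set" where
  "rootsp sc L br H \<alpha> = {x \<in> L. \<forall>h\<in>H. br h x = sc (\<alpha> h) x}"

definition roots :: "(complex \<Rightarrow> 'v::ab_group_add \<Rightarrow> 'v) \<Rightarrow> 'v set \<Rightarrow> ('v \<Rightarrow> 'v \<Rightarrow> 'v) \<Rightarrow> 'v set \<Rightarrow> ('v \<Rightarrow> complex) set" where
  "roots sc L br H = {\<alpha> \<in> hdual sc H. rootsp sc L br H \<alpha> \<noteq> {0}}"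

definition tvec :: "('v \<Rightarrow> 'v \<Rightarrow> complex) \<Rightarrow> 'v set \<Rightarrow> ('v \<Rightarrow> complex) \<Rightarrow> 'v" where
  "tvec B H \<alpha> = (THE t. t \<in> H \<and> (\<forall>h\<in>H. \<alpha> h = B h t))"

definition ipf :: "('v \<Rightarrow> 'v \<Rightarrow> complex) \<Rightarrow> 'v set \<Rightarrow> ('v \<Rightarrow> complex) \<Rightarrow> ('v \<Rightarrow> complex) \<Rightarrow> complex" where
  "ipf B H \<alpha> \<beta> = B (tvec B H \<alpha>) (tvec B H \<beta>)"

definition rspan :: "('v \<Rightarrow> complex) set \<Rightarrow> ('v \<Rightarrow> complex) set" where
  "rspan S = {f. \<exists>F c. finite F \<and> F \<subseteq> S \<and>
                   f = (\<lambda>h. \<Sum>\<beta>\<in>F. complex_of_real (c \<beta>) * \<beta> h)}"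

text \<open>Discreteness of a set S of functionals on H in the (unique Hausdorff vector space)
topology of H^*, written via the basic neighbourhoods of the topology of pointwise
convergence on H (which coincides with the norm topology, H being finite-dimensional).\<close>
definition discrete_dual :: "'v set \<Rightarrow> ('v \<Rightarrow> complex) set \<Rightarrow> bool" where
  "discrete_dual H S \<longleftrightarrow>
     (\<forall>\<alpha>\<in>S. \<exists>F \<epsilon>. finite F \<and> F \<subseteq> H \<and> \<epsilon> > 0 \<and>
        (\<forall>\<beta>\<in>S. (\<forall>h\<in>F. cmod (\<beta> h - \<alpha> h) < \<epsilon>) \<longrightarrow> \<beta> = \<alpha>))"

definition nonisot :: "(('v \<Rightarrow> complex) \<Rightarrow> ('v \<Rightarrow> complex) \<Rightarrow> complex) \<Rightarrow> ('v \<Rightarrow> complex) set \<Rightarrow> ('v \<Rightarrow> complex) set" where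
  "nonisot ip S = {\<alpha> \<in> S. ip \<alpha> \<alpha> \<noteq> 0}"

definition isot :: "(('v \<Rightarrow> complex) \<Rightarrow> ('v \<Rightarrow> complex) \<Rightarrow> complex) \<Rightarrow> ('v \<Rightarrow> complex) set \<Rightarrow> ('v \<Rightarrow> complex) set" where
  "isot ip S = {\<alpha> \<in> S. ip \<alpha> \<alpha> = 0}"

definition connected_roots :: "(('v \<Rightarrow> complex) \<Rightarrow> ('v \<Rightarrow> complex) \<Rightarrow> complex) \<Rightarrow> ('v \<Rightarrow> complex) set \<Rightarrow> bool" where
  "connected_roots ip S \<longleftrightarrow>
     \<not> (\<exists>A C. A \<noteq> {} \<and> C \<noteq> {} \<and> A \<union> C = nonisot ip S \<and> (\<forall>a\<in>A. \<forall>b\<in>C. ip a b = 0))"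

definition isot_nonisolated :: "(('v \<Rightarrow> complex) \<Rightarrow> ('v \<Rightarrow> complex) \<Rightarrow> complex) \<Rightarrow> ('v \<Rightarrow> complex) set \<Rightarrow> bool" where
  "isot_nonisolated ip S \<longleftrightarrow>
     (\<forall>\<sigma>\<in>isot ip S. \<exists>\<alpha>\<in>nonisot ip S. (\<lambda>h. \<alpha> h + \<sigma> h) \<in> S)"

text \<open>Standing assumption: the finite root system R^x modulo span_R R^0 is reduced,
i.e. for alpha, beta in R^x, beta - 2 alpha does not lie in span_R R^0.\<close>
definition reduced_quot :: "(('v \<Rightarrow> complex) \<Rightarrow> ('v \<Rightarrow> complex) \<Rightarrow> complex) \<Rightarrow> ('v \<Rightarrow> complex) set \<Rightarrow> bool" where
  "reduced_quot ip S \<longleftrightarrow>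
     (\<forall>\<alpha>\<in>nonisot ip S. \<forall>\<beta>\<in>nonisot ip S. (\<lambda>h. \<beta> h - 2 * \<alpha> h) \<notin> rspan (isot ip S))"

definition eala :: "(complex \<Rightarrow> 'v::ab_group_add \<Rightarrow> 'v) \<Rightarrow> 'v set \<Rightarrow> ('v \<Rightarrow> 'v \<Rightarrow> 'v) \<Rightarrow> ('v \<Rightarrow> 'v \<Rightarrow> complex) \<Rightarrow> 'v set \<Rightarrow> bool" where
  "eala sc L br B H \<longleftrightarrow>
     lie_algebra sc L br \<and>
     \<comment> \<open>(EA1)\<close>
     ea1_form sc L br B \<and>
     \<comment> \<open>(EA2)\<close>
     H \<subseteq> L \<and> module.subspace sc H \<and> (\<forall>x\<in>H. \<forall>y\<in>H. br x y \<in> H) \<and>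
     (\<exists>F. finite F \<and> F \<subseteq> H \<and> module.span sc F = H) \<and>
     L = module.span sc (\<Union>\<alpha>\<in>hdual sc H. rootsp sc L br H \<alpha>) \<and>
     (\<forall>F x. finite F \<and> F \<subseteq> hdual sc H \<and> (\<forall>\<alpha>\<in>F. x \<alpha> \<in> rootsp sc L br H \<alpha>) \<and> sum x F = 0
            \<longrightarrow> (\<forall>\<alpha>\<in>F. x \<alpha> = 0)) \<and>
     rootsp sc L br H (\<lambda>_. 0) = H \<and>
     \<comment> \<open>(EA3)\<close>
     (\<forall>\<alpha>\<in>nonisot (ipf B H) (roots sc L br H). \<forall>x\<in>rootsp sc L br H \<alpha>. \<forall>y\<in>L.
         \<exists>n. (br x ^^ n) y = 0) \<and>
     \<comment> \<open>(EA4)\<close>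
     discrete_dual H (roots sc L br H) \<and>
     \<comment> \<open>(EA5)\<close>
     connected_roots (ipf B H) (roots sc L br H) \<and>
     isot_nonisolated (ipf B H) (roots sc L br H) \<and>
     \<comment> \<open>standing assumption\<close>
     reduced_quot (ipf B H) (roots sc L br H)"

definition is_ears :: "'v set \<Rightarrow> (('v \<Rightarrow> complex) \<Rightarrow> ('v \<Rightarrow> complex) \<Rightarrow> complex) \<Rightarrow> ('v \<Rightarrow> complex) set \<Rightarrow> bool" where
  "is_ears H ip S \<longleftrightarrow>
     \<comment> \<open>the form is a real symmetric positive semidefinite bilinear form on V\<close>
     (\<forall>x\<in>rspan S. \<forall>y\<in>rspan S. \<forall>z\<in>rspan S. ip (\<lambda>h. x h + y h) z = ip x z + ip y z) \<and>
     (\<forall>c::real. \<forall>x\<in>rspan S. \<forall>y\<in>rspan S. ip (\<lambda>h. complex_of_real c * x h) y = complex_of_real c * ip x y) \<and>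
     (\<forall>x\<in>rspan S. \<forall>y\<in>rspan S. ip x y = ip y x \<and> Im (ip x y) = 0) \<and>
     (\<forall>x\<in>rspan S. Re (ip x x) \<ge> 0) \<and>
     (\<lambda>_. 0) \<in> S \<and>
     (\<forall>\<alpha>\<in>S. (\<lambda>h. - \<alpha> h) \<in> S) \<and>
     (\<forall>\<alpha>\<in>nonisot ip S. (\<lambda>h. 2 * \<alpha> h) \<notin> S) \<and>
     discrete_dual H S \<and>
     (\<forall>\<alpha>\<in>nonisot ip S. \<forall>\<beta>\<in>S. \<exists>d u::nat.
        {k::int. (\<lambda>h. \<beta> h + of_int k * \<alpha> h) \<in> S} = {- int d .. int u} \<and>
        2 * ip \<beta> \<alpha> / ip \<alpha> \<alpha> = of_int (int d - int u)) \<and>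
     isot_nonisolated ip S \<and>
     connected_roots ip S"

definition closed_subsystem :: "(complex \<Rightarrow> 'v::ab_group_add \<Rightarrow> 'v) \<Rightarrow> 'v set \<Rightarrow> ('v \<Rightarrow> 'v \<Rightarrow> 'v) \<Rightarrow> ('v \<Rightarrow> 'v \<Rightarrow> complex) \<Rightarrow> 'v set \<Rightarrow> ('v \<Rightarrow> complex) set \<Rightarrow> bool" where
  "closed_subsystem sc L br B H R' \<longleftrightarrow>
     R' \<subseteq> roots sc L br H \<and>
     is_ears H (ipf B H) R' \<and>
     (\<forall>\<alpha>\<in>R'. \<forall>\<beta>\<in>R'. (\<lambda>h. \<alpha> h + \<beta> h) \<in> roots sc L br H \<longrightarrow> (\<lambda>h. \<alpha> h + \<beta> h) \<in> R')"

definition is_cover :: "(complex \<Rightarrow> 'v::ab_group_add \<Rightarrow> 'v) \<Rightarrow> ('v \<Rightarrow> 'v \<Rightarrow> complex) \<Rightarrow> 'v set \<Rightarrow> ('v \<Rightarrow> complex) set \<Rightarrow> 'v set \<Rightarrow> bool" where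
  "is_cover sc B H R' H' \<longleftrightarrow>
     module.subspace sc H' \<and> H' \<subseteq> H \<and>
     (\<forall>\<alpha>\<in>nonisot (ipf B H) R'. tvec B H \<alpha> \<in> H') \<and>
     (\<forall>x\<in>H'. (\<forall>y\<in>H'. B x y = 0) \<longrightarrow> x = 0)"

definition lie_cover :: "(complex \<Rightarrow> 'v::ab_group_add \<Rightarrow> 'v) \<Rightarrow> 'v set \<Rightarrow> ('v \<Rightarrow> 'v \<Rightarrow> 'v) \<Rightarrow> 'v set \<Rightarrow> ('v \<Rightarrow> complex) set \<Rightarrow> 'v set \<Rightarrow> 'v set" where
  "lie_cover sc L br H R' H' =
     module.span sc (H' \<union> (\<Union>\<alpha>\<in>R' - {\<lambda>_. 0}. rootsp sc L br H \<alpha>))"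

end

theory Submission
  imports Defs "HOL-Library.Function_Algebras"
begin

locale ctx = vector_space sc for sc :: "complex \<Rightarrow> 'v::ab_group_add \<Rightarrow> 'v" +
  fixes L :: "'v set" and br :: "'v \<Rightarrow> 'v \<Rightarrow> 'v" and B :: "'v \<Rightarrow> 'v \<Rightarrow> complex" and H :: "'v set"
  assumes EA: "eala sc L br B H"
begin

abbreviation E where "E \<equiv> rootsp sc L br H"
abbreviation R where "R \<equiv> roots sc L br H"
abbreviation ip where "ip \<equiv> ipf B H"

lemma LA: "lie_algebra sc L br" using EA by (simp add: eala_def)
lemma L_sub: "subspace L" using LA by (simp add: lie_algebra_def)
lemma br_L: "x \<in> L \<Longrightarrow> y \<in> L \<Longrightarrow> br x y \<in> L" using LA by (simp add: lie_algebra_def)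
lemma br_addl: "x \<in> L \<Longrightarrow> y \<in> L \<Longrightarrow> z \<in> L \<Longrightarrow> br (x + y) z = br x z + br y z"
  using LA by (simp add: lie_algebra_def)
lemma br_addr: "x \<in> L \<Longrightarrow> y \<in> L \<Longrightarrow> z \<in> L \<Longrightarrow> br z (x + y) = br z x + br z y"
  using LA by (simp add: lie_algebra_def)
lemma br_scl: "x \<in> L \<Longrightarrow> y \<in> L \<Longrightarrow> br (sc c x) y = sc c (br x y)"
  using LA by (simp add: lie_algebra_def)
lemma br_scr: "x \<in> L \<Longrightarrow> y \<in> L \<Longrightarrow> br x (sc c y) = sc c (br x y)"
  using LA by (simp add: lie_algebra_def)
lemma br_self: "x \<in> L \<Longrightarrow> br x x = 0" using LA by (simp add: lie_algebra_def)
lemma jacobi: "x \<in> L \<Longrightarrow> y \<in> L \<Longrightarrow> z \<in> L \<Longrightarrow> br x (br y z) + br y (br z x) + br z (br x y) = 0"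
  using LA by (simp add: lie_algebra_def)

lemma EA1: "ea1_form sc L br B" using EA by (simp add: eala_def)
lemma B_addl: "x \<in> L \<Longrightarrow> y \<in> L \<Longrightarrow> z \<in> L \<Longrightarrow> B (x + y) z = B x z + B y z"
  using EA1 by (simp add: ea1_form_def)
lemma B_scl: "x \<in> L \<Longrightarrow> y \<in> L \<Longrightarrow> B (sc c x) y = c * B x y"
  using EA1 by (simp add: ea1_form_def)
lemma B_sym: "x \<in> L \<Longrightarrow> y \<in> L \<Longrightarrow> B x y = B y x"
  using EA1 by (simp add: ea1_form_def)
lemma B_nondeg: "x \<in> L \<Longrightarrow> (\<And>y. y \<in> L \<Longrightarrow> B x y = 0) \<Longrightarrow> x = 0"
  using EA1 by (simp add: ea1_form_def)
lemma B_inv: "x \<in> L \<Longrightarrow> y \<in> L \<Longrightarrow> z \<in> L \<Longrightarrow> B (br x y) z = B x (br y z)"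
  using EA1 by (simp add: ea1_form_def)

lemma H_L: "H \<subseteq> L" using EA by (simp add: eala_def)
lemma H_sub: "subspace H" using EA by (simp add: eala_def)
lemma H_fin: "\<exists>F. finite F \<and> F \<subseteq> H \<and> span F = H" using EA by (simp add: eala_def)
lemma L_span: "L = span (\<Union>\<alpha>\<in>hdual sc H. E \<alpha>)" using EA by (simp add: eala_def)
lemma E0: "E (\<lambda>_. 0) = H" using EA by (simp add: eala_def)
lemma EA3: "\<alpha> \<in> nonisot ip R \<Longrightarrow> x \<in> E \<alpha> \<Longrightarrow> y \<in> L \<Longrightarrow> \<exists>n. (br x ^^ n) y = 0"
  using EA by (simp add: eala_def)
lemma reducedR: "reduced_quot ip R" using EA by (simp add: eala_def)

lemma L0: "0 \<in> L" using L_sub subspace_0 by blast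
lemma L_add: "x \<in> L \<Longrightarrow> y \<in> L \<Longrightarrow> x + y \<in> L" using L_sub subspace_add by blast
lemma L_scale: "x \<in> L \<Longrightarrow> sc c x \<in> L" using L_sub subspace_scale by blast
lemma L_neg: "x \<in> L \<Longrightarrow> - x \<in> L" using L_sub subspace_neg by blast
lemma L_diff: "x \<in> L \<Longrightarrow> y \<in> L \<Longrightarrow> x - y \<in> L" using L_sub subspace_diff by blast
lemma L_sum: "(\<And>i. i \<in> F \<Longrightarrow> f i \<in> L) \<Longrightarrow> sum f F \<in> L" using L_sub subspace_sum by blast

lemma br_0l: "x \<in> L \<Longrightarrow> br 0 x = 0"
  using br_addl[OF L0 L0, of x] by simp
lemma br_0r: "x \<in> L \<Longrightarrow> br x 0 = 0"
  using br_addr[OF L0 L0, of x] by simp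
lemma br_anti: "x \<in> L \<Longrightarrow> y \<in> L \<Longrightarrow> br x y = - br y x"
proof -
  assume a: "x \<in> L" "y \<in> L"
  have "0 = br (x + y) (x + y)" using br_self L_add a by simp
  also have "\<dots> = br x x + br x y + (br y x + br y y)"
    using a by (simp add: br_addl br_addr L_add)
  finally have "br x y + br y x = 0" using a br_self by simp
  then show ?thesis by (simp add: eq_neg_iff_add_eq_0)
qed
lemma br_negr: "x \<in> L \<Longrightarrow> y \<in> L \<Longrightarrow> br x (- y) = - br x y"
  using br_scr[of x y "-1"] by simp
lemma br_diffr: "x \<in> L \<Longrightarrow> y \<in> L \<Longrightarrow> z \<in> L \<Longrightarrow> br z (x - y) = br z x - br z y"
  using br_addr[of x "-y" z] br_negr L_neg by simp
lemma br_sumr: "x \<in> L \<Longrightarrow> (\<And>i. i \<in> F \<Longrightarrow> f i \<in> L) \<Longrightarrow> br x (sum f F) = (\<Sum>i\<in>F. br x (f i))"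
proof (induction F rule: infinite_finite_induct)
  case (infinite F) then show ?case using br_0r by simp
next
  case empty then show ?case using br_0r by simp
next
  case (insert a F) then show ?case by (simp add: br_addr L_sum)
qed

lemma B_0l: "y \<in> L \<Longrightarrow> B 0 y = 0" using B_addl[OF L0 L0, of y] by simp
lemma B_0r: "y \<in> L \<Longrightarrow> B y 0 = 0" using B_0l[of y] B_sym[of y 0] L0 by simp
lemma B_addr: "x \<in> L \<Longrightarrow> y \<in> L \<Longrightarrow> z \<in> L \<Longrightarrow> B z (x + y) = B z x + B z y"
  using B_addl[of x y z] B_sym[of z "x+y"] B_sym[of z x] B_sym[of z y] L_add[of x y] by simp
lemma B_scr: "x \<in> L \<Longrightarrow> y \<in> L \<Longrightarrow> B x (sc c y) = c * B x y"
  using B_scl[of y x c] B_sym[of x "sc c y"] B_sym[of x y] L_scale[of y c] by simp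
lemma B_negr: "x \<in> L \<Longrightarrow> y \<in> L \<Longrightarrow> B x (- y) = - B x y"
  using B_scr[of x y "-1"] by simp
lemma B_negl: "x \<in> L \<Longrightarrow> y \<in> L \<Longrightarrow> B (- x) y = - B x y"
  using B_scl[of x y "-1"] by simp
lemma B_diffr: "x \<in> L \<Longrightarrow> y \<in> L \<Longrightarrow> z \<in> L \<Longrightarrow> B z (x - y) = B z x - B z y"
  using B_addr[of x "-y" z] B_negr L_neg by simp
lemma B_diffl: "x \<in> L \<Longrightarrow> y \<in> L \<Longrightarrow> z \<in> L \<Longrightarrow> B (x - y) z = B x z - B y z"
  using B_addl[of x "-y" z] B_negl L_neg by simp
lemma B_suml: "y \<in> L \<Longrightarrow> (\<And>i. i \<in> F \<Longrightarrow> f i \<in> L) \<Longrightarrow> B (sum f F) y = (\<Sum>i\<in>F. B (f i) y)"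
proof (induction F rule: infinite_finite_induct)
  case (infinite F) then show ?case using B_0l by simp
next
  case empty then show ?case using B_0l by simp
next
  case (insert a F) then show ?case by (simp add: B_addl L_sum)
qed
lemma B_sumr: "y \<in> L \<Longrightarrow> (\<And>i. i \<in> F \<Longrightarrow> f i \<in> L) \<Longrightarrow> B y (sum f F) = (\<Sum>i\<in>F. B y (f i))"
proof -
  assume a: "y \<in> L" "\<And>i. i \<in> F \<Longrightarrow> f i \<in> L"
  have "B y (sum f F) = B (sum f F) y" using a B_sym L_sum by blast
  also have "\<dots> = (\<Sum>i\<in>F. B (f i) y)" using a B_suml by blast
  also have "\<dots> = (\<Sum>i\<in>F. B y (f i))" using a B_sym by (intro sum.cong) auto
  finally show ?thesis .
qed

end

definition fsc :: "complex \<Rightarrow> ('a \<Rightarrow> complex) \<Rightarrow> ('a \<Rightarrow> complex)" where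
  "fsc c f = (\<lambda>x. c * f x)"

interpretation FS: vector_space fsc
  by unfold_locales (auto simp: fsc_def fun_eq_iff algebra_simps)

lemma sum_fun_apply: "(sum f F) x = (\<Sum>i\<in>F. f i x)"
  by (induction F rule: infinite_finite_induct) auto

lemma grp3: fixes X::"'a::ab_group_add" shows "X + Y + Z = 0 \<Longrightarrow> Y = - P \<Longrightarrow> Z = - Q \<Longrightarrow> X = Q + P"
proof -
  assume a: "X + Y + Z = 0" "Y = - P" "Z = - Q"
  from a(1) have "X = - (Y + Z)" by (simp only: add.assoc eq_neg_iff_add_eq_0)
  then show ?thesis using a(2,3) by simp
qed

context ctx
begin

lemma rootsp_sub: "K \<subseteq> L \<Longrightarrow> subspace (rootsp sc L br K f)"
  unfolding subspace_def rootsp_def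
proof (intro conjI ballI allI)
  assume K: "K \<subseteq> L"
  show "0 \<in> {x \<in> L. \<forall>h\<in>K. br h x = sc (f h) x}" using K L0 br_0r by auto
  fix x y assume x: "x \<in> {x \<in> L. \<forall>h\<in>K. br h x = sc (f h) x}" and y: "y \<in> {x \<in> L. \<forall>h\<in>K. br h x = sc (f h) x}"
  show "x + y \<in> {x \<in> L. \<forall>h\<in>K. br h x = sc (f h) x}"
    using x y K by (auto simp: br_addr L_add scale_right_distrib subset_iff)
next
  fix c x assume K: "K \<subseteq> L" and x: "x \<in> {x \<in> L. \<forall>h\<in>K. br h x = sc (f h) x}"
  show "sc c x \<in> {x \<in> L. \<forall>h\<in>K. br h x = sc (f h) x}"
    using x K by (auto simp: br_scr L_scale scale_left_commute subset_iff)
qed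

lemma rootsp_L: "rootsp sc L br K f \<subseteq> L" by (auto simp: rootsp_def)

lemma GI:
  assumes K: "K \<subseteq> L" and fin: "finite F"
  shows "(\<forall>i\<in>F. v i \<in> rootsp sc L br K (f i)) \<Longrightarrow> (\<forall>i\<in>F. \<forall>j\<in>F. i \<noteq> j \<longrightarrow> (\<exists>h\<in>K. f i h \<noteq> f j h))
    \<Longrightarrow> sum v F = 0 \<Longrightarrow> \<forall>i\<in>F. v i = 0"
  using fin
proof (induction F arbitrary: v rule: finite_induct)
  case empty then show ?case by simp
next
  case (insert j F)
  have vL: "\<And>i. i \<in> insert j F \<Longrightarrow> v i \<in> L" using insert.prems(1) rootsp_L by blast
  have s: "v j + sum v F = 0" using insert by simp
  have zero: "\<forall>i\<in>F. sc (f i h - f j h) (v i) = 0" if h: "h \<in> K" for h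
  proof -
    have hL: "h \<in> L" using h K by auto
    have "br h (v j + sum v F) = 0" using s br_0r hL by simp
    then have "br h (v j) + (\<Sum>i\<in>F. br h (v i)) = 0"
      using hL vL by (simp add: br_addr L_sum br_sumr)
    then have "sc (f j h) (v j) + (\<Sum>i\<in>F. sc (f i h) (v i)) = 0"
      using insert.prems(1) h by (simp add: rootsp_def)
    moreover have "sc (f j h) (v j) = - sc (f j h) (sum v F)"
      using s by (metis add_eq_0_iff2 scale_minus_right)
    ultimately have "(\<Sum>i\<in>F. sc (f i h) (v i)) - (\<Sum>i\<in>F. sc (f j h) (v i)) = 0"
      by (simp add: scale_sum_right)
    then have "(\<Sum>i\<in>F. sc (f i h - f j h) (v i)) = 0"
      by (simp add: sum_subtractf[symmetric] scale_left_diff_distrib)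
    moreover have "\<forall>i\<in>F. sc (f i h - f j h) (v i) \<in> rootsp sc L br K (f i)"
      using insert.prems(1) rootsp_sub[OF K] subspace_scale by blast
    moreover have "\<forall>i\<in>F. \<forall>i'\<in>F. i \<noteq> i' \<longrightarrow> (\<exists>h\<in>K. f i h \<noteq> f i' h)" using insert.prems(2) by blast
    ultimately show ?thesis using insert.IH[of "\<lambda>i. sc (f i h - f j h) (v i)"] by blast
  qed
  have vF: "\<forall>i\<in>F. v i = 0"
  proof
    fix i assume i: "i \<in> F"
    then have "i \<noteq> j" using insert by auto
    then obtain h where h: "h \<in> K" "f i h \<noteq> f j h" using insert.prems(2) i by blast
    then show "v i = 0" using zero[OF h(1)] i by auto
  qed
  then have "v j = 0" using s by simp
  with vF show ?case by simp
qed

lemma ECL: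
  assumes K: "K \<subseteq> L" and fin: "finite F"
    and v: "\<forall>i\<in>F. v i \<in> rootsp sc L br K (f i)"
    and d: "\<forall>i\<in>F. \<forall>j\<in>F. i \<noteq> j \<longrightarrow> (\<exists>h\<in>K. f i h \<noteq> f j h)"
    and x: "x = sum v F" and xe: "x \<in> rootsp sc L br K \<beta>" and x0: "x \<noteq> 0"
  shows "\<exists>i\<in>F. (\<forall>h\<in>K. \<beta> h = f i h) \<and> x = v i \<and> (\<forall>j\<in>F. j \<noteq> i \<longrightarrow> v j = 0)"
proof -
  have vL: "\<And>i. i \<in> F \<Longrightarrow> v i \<in> L" using v rootsp_L by blast
  have z: "\<forall>i\<in>F. sc (f i h - \<beta> h) (v i) = 0" if h: "h \<in> K" for h
  proof -
    have hL: "h \<in> L" using h K by auto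
    have "br h x = sc (\<beta> h) x" using xe h by (simp add: rootsp_def)
    then have "(\<Sum>i\<in>F. br h (v i)) = sc (\<beta> h) (sum v F)" using x hL vL by (simp add: br_sumr)
    then have "(\<Sum>i\<in>F. sc (f i h) (v i)) - (\<Sum>i\<in>F. sc (\<beta> h) (v i)) = 0"
      using v h by (simp add: rootsp_def scale_sum_right)
    then have "(\<Sum>i\<in>F. sc (f i h - \<beta> h) (v i)) = 0"
      by (simp add: sum_subtractf[symmetric] scale_left_diff_distrib)
    moreover have "\<forall>i\<in>F. sc (f i h - \<beta> h) (v i) \<in> rootsp sc L br K (f i)"
      using v rootsp_sub[OF K] subspace_scale by blast
    ultimately show ?thesis using GI[OF K fin, of "\<lambda>i. sc (f i h - \<beta> h) (v i)" f] d by blast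
  qed
  obtain i where i: "i \<in> F" "v i \<noteq> 0"
    using x x0 by (metis sum.neutral)
  have fi: "\<forall>h\<in>K. \<beta> h = f i h"
  proof
    fix h assume "h \<in> K"
    then have "sc (f i h - \<beta> h) (v i) = 0" using z i by blast
    then show "\<beta> h = f i h" using i(2) by simp
  qed
  have oth: "\<forall>j\<in>F. j \<noteq> i \<longrightarrow> v j = 0"
  proof (intro ballI impI)
    fix j assume j: "j \<in> F" "j \<noteq> i"
    show "v j = 0"
    proof (rule ccontr)
      assume "v j \<noteq> 0"
      then have "\<forall>h\<in>K. \<beta> h = f j h"
        using z j by (metis eq_iff_diff_eq_0 scale_eq_0_iff)
      then show False using d i j fi by metis
    qed
  qed
  have "x = v i + sum v (F - {i})" using x i fin by (simp add: sum.remove)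
  also have "sum v (F - {i}) = 0" using oth by (intro sum.neutral) auto
  finally show ?thesis using i fi oth by auto
qed

lemma H_abel: "h \<in> H \<Longrightarrow> h' \<in> H \<Longrightarrow> br h h' = 0"
  using E0 by (auto simp: rootsp_def)

lemma E_br:
  assumes x: "x \<in> E \<alpha>" and y: "y \<in> E \<beta>"
  shows "br x y \<in> E (\<lambda>h. \<alpha> h + \<beta> h)"
proof -
  have xL: "x \<in> L" and yL: "y \<in> L" using x y by (auto simp: rootsp_def)
  have "br h (br x y) = sc (\<alpha> h + \<beta> h) (br x y)" if h: "h \<in> H" for h
  proof -
    have hL: "h \<in> L" using h H_L by auto
    have j: "br h (br x y) + br x (br y h) + br y (br h x) = 0" using jacobi[OF hL xL yL] .
    have 1: "br y h = - sc (\<beta> h) y" using br_anti[OF yL hL] y h by (simp add: rootsp_def)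
    have 2: "br h x = sc (\<alpha> h) x" using x h by (simp add: rootsp_def)
    have "br x (br y h) = - sc (\<beta> h) (br x y)" using 1 xL yL by (simp add: br_negr L_scale br_scr)
    moreover have "br y (br h x) = - sc (\<alpha> h) (br x y)" using 2 xL yL br_anti[OF yL xL]
      by (simp add: br_scr)
    ultimately have "br h (br x y) = sc (\<alpha> h) (br x y) + sc (\<beta> h) (br x y)"
      using grp3[OF j] by blast
    then show ?thesis by (simp add: scale_left_distrib)
  qed
  then show ?thesis using br_L[OF xL yL] by (simp add: rootsp_def)
qed

lemma E_orth:
  assumes x: "x \<in> E \<alpha>" and y: "y \<in> E \<beta>" and h: "h \<in> H"
  shows "(\<alpha> h + \<beta> h) * B x y = 0"
proof -
  have xL: "x \<in> L" and yL: "y \<in> L" using x y by (auto simp: rootsp_def)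
  have hL: "h \<in> L" using h H_L by auto
  have "B (br x h) y = B x (br h y)" using B_inv[OF xL hL yL] .
  moreover have "br x h = - sc (\<alpha> h) x" using br_anti[OF xL hL] x h by (simp add: rootsp_def)
  moreover have "br h y = sc (\<beta> h) y" using y h by (simp add: rootsp_def)
  ultimately have "- (\<alpha> h * B x y) = \<beta> h * B x y"
    using xL yL by (simp add: B_negl L_scale B_scl B_scr)
  then have "\<alpha> h * B x y = - (\<beta> h * B x y)" by (metis minus_minus)
  then have "\<alpha> h * B x y + \<beta> h * B x y = 0" by simp
  then show ?thesis by (simp add: distrib_right)
qed

lemma hdual_eqI: "\<alpha> \<in> hdual sc H \<Longrightarrow> \<beta> \<in> hdual sc H \<Longrightarrow> (\<And>h. h \<in> H \<Longrightarrow> \<alpha> h = \<beta> h) \<Longrightarrow> \<alpha> = \<beta>"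
  by (auto simp: hdual_def fun_eq_iff) (metis)

lemma hdual_distinct: "\<alpha> \<in> hdual sc K \<Longrightarrow> \<beta> \<in> hdual sc K \<Longrightarrow> \<alpha> \<noteq> \<beta> \<Longrightarrow> \<exists>h\<in>K. \<alpha> h \<noteq> \<beta> h"
  by (auto simp: hdual_def fun_eq_iff) (metis)

lemma span_UN:
  assumes U: "\<And>i. i \<in> I \<Longrightarrow> subspace (U i)" and x: "x \<in> span (\<Union>i\<in>I. U i)"
  shows "\<exists>F v. finite F \<and> F \<subseteq> I \<and> (\<forall>i\<in>F. v i \<in> U i) \<and> x = sum v F"
  using x
proof (induction rule: span_induct_alt)
  case base
  then show ?case by (intro exI[of _ "{}"]) auto
next
  case (step c x y)
  then obtain j where j: "j \<in> I" "x \<in> U j" by auto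
  from step obtain F v where F: "finite F" "F \<subseteq> I" "\<forall>i\<in>F. v i \<in> U i" "y = sum v F" by blast
  define w where "w = (if j \<in> F then v j else 0)"
  have wU: "w \<in> U j" using F j U[OF j(1)] subspace_0 by (auto simp: w_def)
  have sF: "sum v F = w + sum v (F - {j})" using F by (auto simp: w_def sum.remove)
  define v' where "v' = v(j := sc c x + w)"
  have "sum v' (insert j F) = v' j + sum v' (F - {j})" using F by (simp add: sum.insert_remove)
  also have "sum v' (F - {j}) = sum v (F - {j})" by (intro sum.cong) (auto simp: v'_def)
  finally have "sum v' (insert j F) = sc c x + y" using sF F by (simp add: v'_def add.assoc)
  moreover have "\<forall>i\<in>insert j F. v' i \<in> U i"
    using F wU j U[OF j(1)] by (auto simp: v'_def intro: subspace_add subspace_scale)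
  ultimately show ?case using F j by (intro exI[of _ "insert j F"] exI[of _ v']) auto
qed

lemma E_sub: "subspace (E \<alpha>)" using rootsp_sub H_L by blast

lemma L_decomp: "x \<in> L \<Longrightarrow> \<exists>F v. finite F \<and> F \<subseteq> hdual sc H \<and> (\<forall>\<alpha>\<in>F. v \<alpha> \<in> E \<alpha>) \<and> x = sum v F"
  using span_UN[of "hdual sc H" E x] E_sub L_span by blast

lemma B_H_nondeg:
  assumes h: "h \<in> H" and o: "\<And>h'. h' \<in> H \<Longrightarrow> B h h' = 0"
  shows "h = 0"
proof (rule B_nondeg)
  show hL: "h \<in> L" using h H_L by auto
  fix y assume "y \<in> L"
  then obtain F v where F: "finite F" "F \<subseteq> hdual sc H" "\<forall>\<alpha>\<in>F. v \<alpha> \<in> E \<alpha>" "y = sum v F"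
    using L_decomp by blast
  have vL: "\<And>\<alpha>. \<alpha> \<in> F \<Longrightarrow> v \<alpha> \<in> L" using F rootsp_L by blast
  have "B h (v \<alpha>) = 0" if a: "\<alpha> \<in> F" for \<alpha>
  proof (cases "\<alpha> = (\<lambda>_. 0)")
    case True then show ?thesis using o F a E0 by auto
  next
    case False
    have z: "(\<lambda>_. 0::complex) \<in> hdual sc H" by (simp add: hdual_def)
    obtain h' where h': "h' \<in> H" "\<alpha> h' \<noteq> 0" using hdual_distinct[OF _ z False] F a by auto
    have "h \<in> E (\<lambda>_. 0)" using E0 h by simp
    from E_orth[OF this _ h'(1), of "v \<alpha>" \<alpha>] F a h' show ?thesis by simp
  qed
  then show "B h y = 0" using F hL vL by (simp add: B_sumr)
qed

end

context ctx
begin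

lemma fin_dim_sub:
  assumes W: "subspace W" "W \<subseteq> H"
  shows "\<exists>Bs. finite Bs \<and> Bs \<subseteq> W \<and> independent Bs \<and> span Bs = W"
proof -
  obtain F where F: "finite F" "F \<subseteq> H" "span F = H" using H_fin by blast
  obtain Bs where Bs: "Bs \<subseteq> W" "independent Bs" "W \<subseteq> span Bs"
    using maximal_independent_subset[of W] by blast
  have "Bs \<subseteq> span F" using Bs W F by auto
  then have "finite Bs" using independent_span_bound[OF F(1) Bs(2)] by blast
  moreover have "span Bs = W" using Bs W span_minimal by (intro antisym) auto
  ultimately show ?thesis using Bs by blast
qed

lemma lin_zero:
  assumes add: "\<forall>x\<in>W. \<forall>y\<in>W. \<phi> (x + y) = \<phi> x + \<phi> y" and W: "subspace W"
  shows "\<phi> 0 = (0::complex)"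
proof -
  have "\<phi> (0 + 0) = \<phi> 0 + \<phi> 0" using add subspace_0[OF W] by blast
  then show ?thesis by simp
qed

lemma lin_sum:
  assumes add: "\<forall>x\<in>W. \<forall>y\<in>W. \<phi> (x + y) = \<phi> x + \<phi> y"
    and scl: "\<forall>c. \<forall>x\<in>W. \<phi> (sc c x) = c * \<phi> x" and W: "subspace W"
    and g: "\<forall>i\<in>F. g i \<in> W"
  shows "\<phi> (\<Sum>i\<in>F. sc (a i) (g i)) = (\<Sum>i\<in>F. a i * \<phi> (g i))"
  using g
proof (induction F rule: infinite_finite_induct)
  case (infinite F) then show ?case using lin_zero[OF add W] by simp
next
  case empty then show ?case using lin_zero[OF add W] by simp
next
  case (insert j F)
  have "(\<Sum>i\<in>F. sc (a i) (g i)) \<in> W" using insert W by (auto intro!: subspace_sum subspace_scale)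
  moreover have "sc (a j) (g j) \<in> W" using insert W by (auto intro!: subspace_scale)
  ultimately show ?case using insert add scl by simp
qed

lemma riesz:
  assumes W: "subspace W" "W \<subseteq> L"
    and Bs: "finite Bs" "Bs \<subseteq> W" "independent Bs" "span Bs = W"
    and nd: "\<forall>x\<in>W. (\<forall>y\<in>W. B x y = 0) \<longrightarrow> x = 0"
    and add: "\<forall>x\<in>W. \<forall>y\<in>W. \<phi> (x + y) = \<phi> x + \<phi> y"
    and scl: "\<forall>c. \<forall>x\<in>W. \<phi> (sc c x) = c * \<phi> x"
  shows "\<exists>t\<in>W. \<forall>h\<in>W. \<phi> h = B h t"
proof -
  define coord where "coord b = (\<lambda>x. if x \<in> W then representation Bs x b else 0)" for b
  define C where "C = coord ` Bs"
  have finC: "finite C" using Bs by (simp add: C_def)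
  have inC: "\<psi> \<in> FS.span C"
    if ladd: "\<forall>x\<in>W. \<forall>y\<in>W. \<psi> (x + y) = \<psi> x + \<psi> y"
      and lscl: "\<forall>c. \<forall>x\<in>W. \<psi> (sc c x) = c * \<psi> x"
      and out: "\<forall>x. x \<notin> W \<longrightarrow> \<psi> x = 0" for \<psi>
  proof -
    have "\<psi> = (\<Sum>b\<in>Bs. fsc (\<psi> b) (coord b))"
    proof
      fix x
      show "\<psi> x = (\<Sum>b\<in>Bs. fsc (\<psi> b) (coord b)) x"
      proof (cases "x \<in> W")
        case True
        have "x = (\<Sum>b\<in>Bs. sc (representation Bs x b) b)"
          using sum_representation_eq[OF Bs(3) _ Bs(1) order_refl, of x] True Bs(4) by simp
        then have "\<psi> x = (\<Sum>b\<in>Bs. representation Bs x b * \<psi> b)"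
          using lin_sum[OF ladd lscl W(1), of Bs "\<lambda>b. b" "representation Bs x"] Bs(2) by auto
        then show ?thesis using True by (simp add: sum_fun_apply fsc_def coord_def mult.commute)
      next
        case False
        then show ?thesis using out by (simp add: sum_fun_apply fsc_def coord_def)
      qed
    qed
    also have "\<dots> \<in> FS.span C"
      by (intro FS.span_sum FS.span_scale FS.span_base) (auto simp: C_def)
    finally show ?thesis .
  qed
  define T where "T t = (\<lambda>h. if h \<in> W then B h t else 0)" for t
  have TC: "T t \<in> FS.span C" if t: "t \<in> W" for t
  proof (rule inC)
    show "\<forall>x\<in>W. \<forall>y\<in>W. T t (x + y) = T t x + T t y"
      using t W subspace_add[OF W(1)] by (auto simp: T_def subset_iff B_addl)
    show "\<forall>c. \<forall>x\<in>W. T t (sc c x) = c * T t x"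
      using t W subspace_scale[OF W(1)] by (auto simp: T_def subset_iff B_scl)
    show "\<forall>x. x \<notin> W \<longrightarrow> T t x = 0" by (simp add: T_def)
  qed
  have Tlin: "(\<Sum>b\<in>Bs. fsc (u b) (T b)) = T (\<Sum>b\<in>Bs. sc (u b) b)" for u
  proof
    fix h
    show "(\<Sum>b\<in>Bs. fsc (u b) (T b)) h = T (\<Sum>b\<in>Bs. sc (u b) b) h"
    proof (cases "h \<in> W")
      case True
      then have hL: "h \<in> L" using W by auto
      have "B h (\<Sum>b\<in>Bs. sc (u b) b) = (\<Sum>b\<in>Bs. B h (sc (u b) b))"
        using Bs W by (intro B_sumr[OF hL] L_scale) auto
      also have "\<dots> = (\<Sum>b\<in>Bs. u b * B h b)"
        using Bs W hL by (intro sum.cong) (auto simp: B_scr)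
      finally show ?thesis using True by (simp add: T_def sum_fun_apply fsc_def)
    next
      case False then show ?thesis by (simp add: T_def sum_fun_apply fsc_def)
    qed
  qed
  have Tzero: "w = 0" if w: "w \<in> W" "T w = 0" for w
  proof -
    have "\<forall>y\<in>W. B w y = 0"
    proof
      fix y assume y: "y \<in> W"
      have "B y w = 0" using fun_cong[OF w(2), of y] y by (simp add: T_def)
      moreover have "y \<in> L" "w \<in> L" using y w W by auto
      ultimately show "B w y = 0" using B_sym by metis
    qed
    then show ?thesis using nd w by blast
  qed
  have Tdiff: "T (b - b') = T b - T b'" if "b \<in> W" "b' \<in> W" for b b'
    using that W by (auto simp: T_def fun_eq_iff subset_iff B_diffr)
  have injT: "inj_on T Bs"
  proof
    fix b b' assume b: "b \<in> Bs" "b' \<in> Bs" "T b = T b'"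
    have "T (b - b') = 0" using Tdiff[of b b'] b Bs by auto
    then have "b - b' = 0" using Tzero[of "b - b'"] b Bs subspace_diff[OF W(1)] by auto
    then show "b = b'" by simp
  qed
  have indT: "FS.independent (T ` Bs)"
  proof (rule FS.independent_if_scalars_zero)
    show "finite (T ` Bs)" using Bs by simp
    fix u g assume s: "(\<Sum>x\<in>T ` Bs. fsc (u x) x) = 0" and g: "g \<in> T ` Bs"
    have "(\<Sum>x\<in>T ` Bs. fsc (u x) x) = (\<Sum>b\<in>Bs. fsc (u (T b)) (T b))"
      using sum.reindex[OF injT] by simp
    also have "\<dots> = T (\<Sum>b\<in>Bs. sc (u (T b)) b)" by (rule Tlin)
    finally have "T (\<Sum>b\<in>Bs. sc (u (T b)) b) = 0" using s by simp
    moreover have "(\<Sum>b\<in>Bs. sc (u (T b)) b) \<in> W"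
      using Bs W by (auto intro!: subspace_sum subspace_scale)
    ultimately have "(\<Sum>b\<in>Bs. sc (u (T b)) b) = 0" using Tzero by blast
    then have "\<forall>b\<in>Bs. u (T b) = 0"
      using independentD[OF Bs(3) Bs(1) order_refl, of "\<lambda>b. u (T b)"] by blast
    then show "u g = 0" using g by auto
  qed
  define \<phi>' where "\<phi>' = (\<lambda>h. if h \<in> W then \<phi> h else 0)"
  have phiC: "\<phi>' \<in> FS.span C"
    by (rule inC) (use add scl subspace_add[OF W(1)] subspace_scale[OF W(1)] in \<open>auto simp: \<phi>'_def\<close>)
  have phiT: "\<phi>' \<in> FS.span (T ` Bs)"
  proof (rule ccontr)
    assume nin: "\<phi>' \<notin> FS.span (T ` Bs)"
    then have ind: "FS.independent (insert \<phi>' (T ` Bs))" using FS.independent_insertI indT by blast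
    have "insert \<phi>' (T ` Bs) \<subseteq> FS.span C" using phiC TC Bs by auto
    then have "card (insert \<phi>' (T ` Bs)) \<le> card C" using FS.independent_span_bound[OF finC ind] by blast
    moreover have "card (insert \<phi>' (T ` Bs)) = card Bs + 1"
    proof -
      have "\<phi>' \<notin> T ` Bs" using nin FS.span_base[of \<phi>' "T ` Bs"] by blast
      then show ?thesis using Bs(1) card_image[OF injT] by (simp add: card_insert_disjoint)
    qed
    moreover have "card C \<le> card Bs" unfolding C_def using card_image_le[OF Bs(1)] .
    ultimately show False by simp
  qed
  obtain u where u: "\<phi>' = (\<Sum>g\<in>T ` Bs. fsc (u g) g)"
    using phiT FS.span_finite[of "T ` Bs"] Bs(1) by auto
  also have "\<dots> = (\<Sum>b\<in>Bs. fsc (u (T b)) (T b))" using sum.reindex[OF injT] by simp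
  also have "\<dots> = T (\<Sum>b\<in>Bs. sc (u (T b)) b)" by (rule Tlin)
  finally have eq: "\<phi>' = T (\<Sum>b\<in>Bs. sc (u (T b)) b)" .
  have tW: "(\<Sum>b\<in>Bs. sc (u (T b)) b) \<in> W" using Bs W by (auto intro!: subspace_sum subspace_scale)
  show ?thesis
  proof (intro bexI[OF _ tW] ballI)
    fix h assume h: "h \<in> W"
    show "\<phi> h = B h (\<Sum>b\<in>Bs. sc (u (T b)) b)"
      using fun_cong[OF eq, of h] h by (simp add: \<phi>'_def T_def)
  qed
qed

lemma riesz_sub:
  assumes W: "subspace W" "W \<subseteq> H"
    and nd: "\<forall>x\<in>W. (\<forall>y\<in>W. B x y = 0) \<longrightarrow> x = 0"
    and add: "\<forall>x\<in>W. \<forall>y\<in>W. \<phi> (x + y) = \<phi> x + \<phi> y"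
    and scl: "\<forall>c. \<forall>x\<in>W. \<phi> (sc c x) = c * \<phi> x"
  shows "\<exists>t\<in>W. \<forall>h\<in>W. \<phi> h = B h t"
proof -
  obtain Bs where "finite Bs" "Bs \<subseteq> W" "independent Bs" "span Bs = W" using fin_dim_sub[OF W] by blast
  then show ?thesis using riesz[OF W(1) _ _ _ _ _ nd add scl] W H_L by blast
qed

end

context ctx
begin

lemma H_nd: "\<forall>x\<in>H. (\<forall>y\<in>H. B x y = 0) \<longrightarrow> x = 0"
  using B_H_nondeg by blast

lemma tvec_uniq:
  assumes W: "subspace W" "W \<subseteq> H" and nd: "\<forall>x\<in>W. (\<forall>y\<in>W. B x y = 0) \<longrightarrow> x = 0"
    and t: "t \<in> W" "\<forall>h\<in>W. \<alpha> h = B h t"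
  shows "tvec B W \<alpha> = t"
  unfolding tvec_def
proof (rule the_equality)
  show "t \<in> W \<and> (\<forall>h\<in>W. \<alpha> h = B h t)" using t by blast
  fix t' assume t': "t' \<in> W \<and> (\<forall>h\<in>W. \<alpha> h = B h t')"
  have "\<forall>y\<in>W. B (t' - t) y = 0"
  proof
    fix y assume y: "y \<in> W"
    have L': "y \<in> L" "t \<in> L" "t' \<in> L" using y t t' W H_L by auto
    have "B (t' - t) y = B y (t' - t)" using L' B_sym L_diff by metis
    also have "\<dots> = B y t' - B y t" using L' B_diffr by metis
    also have "\<dots> = 0" using t t' y by auto
    finally show "B (t' - t) y = 0" .
  qed
  then have "t' - t = 0" using nd t t' subspace_diff[OF W(1)] by blast
  then show "t' = t" by simp
qed

lemma tvec_H:
  assumes a: "\<alpha> \<in> hdual sc H"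
  shows "tvec B H \<alpha> \<in> H \<and> (\<forall>h\<in>H. \<alpha> h = B h (tvec B H \<alpha>))"
proof -
  have "\<exists>t\<in>H. \<forall>h\<in>H. \<alpha> h = B h t"
    using riesz_sub[OF H_sub order_refl H_nd] a by (auto simp: hdual_def)
  then obtain t where t: "t \<in> H" "\<forall>h\<in>H. \<alpha> h = B h t" by blast
  have "tvec B H \<alpha> = t" using tvec_uniq[OF H_sub order_refl H_nd t] .
  then show ?thesis using t by simp
qed

lemma hdual_lin:
  assumes "\<alpha> \<in> hdual sc K" "\<beta> \<in> hdual sc K"
  shows "(\<lambda>h. a * \<alpha> h + b * \<beta> h) \<in> hdual sc K"
  using assms by (auto simp: hdual_def algebra_simps)

lemma hdual_0: "(\<lambda>_. 0) \<in> hdual sc K" by (simp add: hdual_def)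

lemma hdual_eqK: "\<alpha> \<in> hdual sc K \<Longrightarrow> \<beta> \<in> hdual sc K \<Longrightarrow> (\<And>h. h \<in> K \<Longrightarrow> \<alpha> h = \<beta> h) \<Longrightarrow> \<alpha> = \<beta>"
  by (auto simp: hdual_def fun_eq_iff) (metis)

lemma R_hdual: "R \<subseteq> hdual sc H" by (auto simp: roots_def)

end

locale cctx = ctx sc L br B H for sc :: "complex \<Rightarrow> 'v::ab_group_add \<Rightarrow> 'v" and L br B H +
  fixes R' :: "('v \<Rightarrow> complex) set" and H' :: "'v set"
  assumes CS: "closed_subsystem sc L br B H R'" and CV: "is_cover sc B H R' H'"
begin

lemma R'R: "R' \<subseteq> R" using CS by (simp add: closed_subsystem_def)
lemma EARS: "is_ears H ip R'" using CS by (simp add: closed_subsystem_def)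
lemma R'closed: "\<alpha> \<in> R' \<Longrightarrow> \<beta> \<in> R' \<Longrightarrow> (\<lambda>h. \<alpha> h + \<beta> h) \<in> R \<Longrightarrow> (\<lambda>h. \<alpha> h + \<beta> h) \<in> R'"
  using CS by (simp add: closed_subsystem_def)
lemma H'_sub: "subspace H'" using CV by (simp add: is_cover_def)
lemma H'_H: "H' \<subseteq> H" using CV by (simp add: is_cover_def)
lemma H'_L: "H' \<subseteq> L" using H'_H H_L by auto
lemma H'_nd: "\<forall>x\<in>H'. (\<forall>y\<in>H'. B x y = 0) \<longrightarrow> x = 0" using CV by (simp add: is_cover_def)
lemma tcov: "\<alpha> \<in> nonisot ip R' \<Longrightarrow> tvec B H \<alpha> \<in> H'" using CV by (simp add: is_cover_def)
lemma R'_hdual: "R' \<subseteq> hdual sc H" using R'R R_hdual by auto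
lemma R'0: "(\<lambda>_. 0) \<in> R'" using EARS by (simp add: is_ears_def)
lemma R'neg: "\<alpha> \<in> R' \<Longrightarrow> (\<lambda>h. - \<alpha> h) \<in> R'" using EARS by (simp add: is_ears_def)
lemma R'noniso: "isot_nonisolated ip R'" using EARS by (simp add: is_ears_def)
lemma R'conn: "connected_roots ip R'" using EARS by (simp add: is_ears_def)
lemma R'disc: "discrete_dual H R'" using EARS by (simp add: is_ears_def)
lemma R'psd: "x \<in> rspan R' \<Longrightarrow> Re (ip x x) \<ge> 0" using EARS by (simp add: is_ears_def)
lemma R'im: "x \<in> rspan R' \<Longrightarrow> y \<in> rspan R' \<Longrightarrow> Im (ip x y) = 0" using EARS by (simp add: is_ears_def)

lemma rspan_base: "\<alpha> \<in> S \<Longrightarrow> \<alpha> \<in> rspan S"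
  unfolding rspan_def by (intro CollectI exI[of _ "{\<alpha>}"] exI[of _ "\<lambda>_. 1"]) auto

lemma rspan_2: "\<alpha> \<in> S \<Longrightarrow> \<beta> \<in> S \<Longrightarrow> \<alpha> \<noteq> \<beta> \<Longrightarrow> (\<lambda>h. \<alpha> h + complex_of_real c * \<beta> h) \<in> rspan S"
  unfolding rspan_def
  by (intro CollectI exI[of _ "{\<alpha>, \<beta>}"] exI[of _ "\<lambda>x. if x = \<alpha> then 1 else c"]) auto

lemma tv: "\<alpha> \<in> hdual sc H \<Longrightarrow> tvec B H \<alpha> \<in> H" using tvec_H by blast
lemma tvr: "\<alpha> \<in> hdual sc H \<Longrightarrow> h \<in> H \<Longrightarrow> \<alpha> h = B h (tvec B H \<alpha>)" using tvec_H by blast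

lemma tvec_lin:
  assumes a: "\<alpha> \<in> hdual sc H" and b: "\<beta> \<in> hdual sc H"
  shows "tvec B H (\<lambda>h. \<alpha> h + c * \<beta> h) = tvec B H \<alpha> + sc c (tvec B H \<beta>)"
proof (rule tvec_uniq[OF H_sub order_refl H_nd])
  show "tvec B H \<alpha> + sc c (tvec B H \<beta>) \<in> H"
    using tv[OF a] tv[OF b] H_sub by (intro subspace_add subspace_scale) auto
  show "\<forall>h\<in>H. \<alpha> h + c * \<beta> h = B h (tvec B H \<alpha> + sc c (tvec B H \<beta>))"
  proof
    fix h assume h: "h \<in> H"
    have L': "h \<in> L" "tvec B H \<alpha> \<in> L" "tvec B H \<beta> \<in> L" using h tv[OF a] tv[OF b] H_L by auto
    show "\<alpha> h + c * \<beta> h = B h (tvec B H \<alpha> + sc c (tvec B H \<beta>))"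
      using L' tvr[OF a h] tvr[OF b h] by (simp add: B_addr L_scale B_scr)
  qed
qed

lemma Bexp:
  assumes "t1 \<in> L" "t2 \<in> L"
  shows "B (t1 + sc c t2) (t1 + sc c t2) = B t1 t1 + 2 * c * B t1 t2 + c * c * B t2 t2"
proof -
  have s: "B t2 t1 = B t1 t2" using assms B_sym by metis
  show ?thesis using assms s
    by (simp add: B_addl B_addr L_scale L_add B_scl B_scr algebra_simps)
qed

lemma KeyT: assumes s: "\<sigma> \<in> R'" shows "tvec B H \<sigma> \<in> H'"
proof (cases "ip \<sigma> \<sigma> = 0")
  case False
  then show ?thesis using tcov s by (simp add: nonisot_def)
next
  case True
  then have "\<sigma> \<in> isot ip R'" using s by (simp add: isot_def)
  then obtain a where a: "a \<in> nonisot ip R'" and as: "(\<lambda>h. a h + \<sigma> h) \<in> R'"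
    using R'noniso by (auto simp: isot_nonisolated_def)
  have aR: "a \<in> R'" and aip: "ip a a \<noteq> 0" using a by (auto simp: nonisot_def)
  have ad: "a \<in> hdual sc H" and sd: "\<sigma> \<in> hdual sc H" using aR s R'_hdual by auto
  define t1 where "t1 = tvec B H a"
  define t2 where "t2 = tvec B H \<sigma>"
  have tL: "t1 \<in> L" "t2 \<in> L" using tv[OF ad] tv[OF sd] H_L by (auto simp: t1_def t2_def)
  have t22: "B t2 t2 = 0" using True by (simp add: ipf_def t2_def)
  have t11: "B t1 t1 \<noteq> 0" using aip by (simp add: ipf_def t1_def)
  have neq: "a \<noteq> \<sigma>" using aip True by auto
  have quad: "Re (B t1 t1) + 2 * c * Re (B t1 t2) \<ge> 0" for c :: real
  proof -
    let ?x = "\<lambda>h. a h + complex_of_real c * \<sigma> h"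
    have "?x \<in> rspan R'" using rspan_2[OF aR s neq] .
    then have "Re (ip ?x ?x) \<ge> 0" by (rule R'psd)
    moreover have "tvec B H ?x = t1 + sc (complex_of_real c) t2"
      using tvec_lin[OF ad sd] by (simp add: t1_def t2_def)
    ultimately have "Re (B (t1 + sc (complex_of_real c) t2) (t1 + sc (complex_of_real c) t2)) \<ge> 0"
      by (simp add: ipf_def)
    then show ?thesis using Bexp[OF tL, of "complex_of_real c"] t22 by simp
  qed
  have re0: "Re (B t1 t2) = 0"
  proof (rule ccontr)
    assume nz: "Re (B t1 t2) \<noteq> 0"
    have "Re (B t1 t1) + 2 * (- (Re (B t1 t1) + 1) / (2 * Re (B t1 t2))) * Re (B t1 t2) \<ge> 0"
      by (rule quad)
    moreover have "2 * (- (Re (B t1 t1) + 1) / (2 * Re (B t1 t2))) * Re (B t1 t2) = - (Re (B t1 t1) + 1)"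
      using nz by (simp add: field_simps)
    ultimately show False by simp
  qed
  have im0: "Im (B t1 t2) = 0"
    using R'im[OF rspan_base[OF aR] rspan_base[OF s]] by (simp add: ipf_def t1_def t2_def)
  have b0: "B t1 t2 = 0" using re0 im0 by (simp add: complex_eq_iff)
  have "tvec B H (\<lambda>h. a h + \<sigma> h) = t1 + t2"
    using tvec_lin[OF ad sd, of 1] by (simp add: t1_def t2_def)
  moreover have "B (t1 + t2) (t1 + t2) = B t1 t1" using Bexp[OF tL, of 1] b0 t22 by simp
  ultimately have "ip (\<lambda>h. a h + \<sigma> h) (\<lambda>h. a h + \<sigma> h) \<noteq> 0" using t11 by (simp add: ipf_def)
  then have "(\<lambda>h. a h + \<sigma> h) \<in> nonisot ip R'" using as by (simp add: nonisot_def)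
  then have "t1 + t2 \<in> H'" using tcov \<open>tvec B H (\<lambda>h. a h + \<sigma> h) = t1 + t2\<close> by metis
  moreover have "t1 \<in> H'" using tcov[OF a] by (simp add: t1_def)
  ultimately have "(t1 + t2) - t1 \<in> H'" using subspace_diff[OF H'_sub] by blast
  then show ?thesis by (simp add: t2_def)
qed

lemma tR: "\<alpha> \<in> R' \<Longrightarrow> tvec B H \<alpha> \<in> H' \<and> (\<forall>h\<in>H. \<alpha> h = B h (tvec B H \<alpha>))"
  using KeyT tvr R'_hdual by blast

lemma agree:
  assumes f: "f \<in> hdual sc H" "t \<in> H'" "\<forall>h\<in>H. f h = B h t"
    and g: "g \<in> hdual sc H" "t' \<in> H'" "\<forall>h\<in>H. g h = B h t'"
    and e: "\<forall>h\<in>H'. f h = g h"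
  shows "f = g"
proof -
  have "\<forall>y\<in>H'. B (t - t') y = 0"
  proof
    fix y assume y: "y \<in> H'"
    have L': "y \<in> L" "t \<in> L" "t' \<in> L" using y f g H'_L by auto
    have "B (t - t') y = B y (t - t')" using L' B_sym L_diff by metis
    also have "\<dots> = B y t - B y t'" using L' B_diffr by metis
    also have "\<dots> = 0"
    proof -
      have yH: "y \<in> H" using y H'_H by auto
      have "B y t = f y" using f(3) yH by simp
      also have "\<dots> = g y" using e y by simp
      also have "\<dots> = B y t'" using g(3) yH by simp
      finally show ?thesis by simp
    qed
    finally show "B (t - t') y = 0" .
  qed
  then have "t - t' = 0" using H'_nd f g subspace_diff[OF H'_sub] by blast
  then have "t = t'" by simp
  then show ?thesis using f g by (intro hdual_eqI) auto
qed

lemma restr_inj: "\<alpha> \<in> R' \<Longrightarrow> \<beta> \<in> R' \<Longrightarrow> \<forall>h\<in>H'. \<alpha> h = \<beta> h \<Longrightarrow> \<alpha> = \<beta>"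
  using agree[of \<alpha> "tvec B H \<alpha>" \<beta> "tvec B H \<beta>"] tR R'_hdual by blast

lemma R'dist: "\<alpha> \<in> R' \<Longrightarrow> \<beta> \<in> R' \<Longrightarrow> \<alpha> \<noteq> \<beta> \<Longrightarrow> \<exists>h\<in>H'. \<alpha> h \<noteq> \<beta> h"
  using restr_inj by blast

lemma tvec_transfer: "\<alpha> \<in> R' \<Longrightarrow> tvec B H' (restr H' \<alpha>) = tvec B H \<alpha>"
proof -
  assume a: "\<alpha> \<in> R'"
  have "\<forall>h\<in>H'. restr H' \<alpha> h = B h (tvec B H \<alpha>)" using tR[OF a] H'_H by (auto simp: restr_def)
  then show ?thesis using tvec_uniq[OF H'_sub H'_H H'_nd] tR[OF a] by blast
qed

lemma ip_transfer: "\<alpha> \<in> R' \<Longrightarrow> \<beta> \<in> R' \<Longrightarrow> ipf B H' (restr H' \<alpha>) (restr H' \<beta>) = ip \<alpha> \<beta>"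
  by (simp add: ipf_def tvec_transfer)

lemma restr_hdual: "\<alpha> \<in> hdual sc H \<Longrightarrow> restr H' \<alpha> \<in> hdual sc H'"
  using H'_H subspace_add[OF H'_sub] subspace_scale[OF H'_sub]
  by (auto simp: hdual_def restr_def subset_iff)

lemma restr_inj_on: "inj_on (restr H') R'"
proof
  fix a b assume "a \<in> R'" "b \<in> R'" "restr H' a = restr H' b"
  then show "a = b" using restr_inj by (metis restr_def)
qed

end

context cctx
begin

definition U where "U \<gamma> = (if \<gamma> = (\<lambda>_. 0) then H' else E \<gamma>)"
abbreviation Lc where "Lc \<equiv> lie_cover sc L br H R' H'"

lemma Lc_eq: "Lc = span (\<Union>\<gamma>\<in>R'. U \<gamma>)"
proof -
  have "H' \<union> (\<Union>\<alpha>\<in>R' - {\<lambda>_. 0}. E \<alpha>) = (\<Union>\<gamma>\<in>R'. U \<gamma>)"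
    using R'0 by (auto simp: U_def split: if_splits)
  then show ?thesis by (simp add: lie_cover_def)
qed

lemma U_sub: "subspace (U \<gamma>)" using H'_sub E_sub by (simp add: U_def)
lemma U_L: "U \<gamma> \<subseteq> L" using H'_L rootsp_L by (simp add: U_def)
lemma U_eig: "\<gamma> \<in> R' \<Longrightarrow> U \<gamma> \<subseteq> rootsp sc L br H' \<gamma>"
proof
  fix x assume g: "\<gamma> \<in> R'" and x: "x \<in> U \<gamma>"
  show "x \<in> rootsp sc L br H' \<gamma>"
  proof (cases "\<gamma> = (\<lambda>_. 0)")
    case True
    then have "x \<in> H'" using x by (simp add: U_def)
    then show ?thesis using True H'_H H'_L H_abel by (auto simp: rootsp_def subset_iff)
  next
    case False
    then have "x \<in> E \<gamma>" using x by (simp add: U_def)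
    then show ?thesis using H'_H by (auto simp: rootsp_def)
  qed
qed
lemma U_Lc: "\<gamma> \<in> R' \<Longrightarrow> U \<gamma> \<subseteq> Lc" unfolding Lc_eq using span_superset by blast
lemma Lc_L: "Lc \<subseteq> L" unfolding Lc_eq using U_L by (intro span_minimal L_sub) auto
lemma Lc_sub: "subspace Lc" unfolding Lc_eq by simp

lemma Lc_decomp: "x \<in> Lc \<Longrightarrow> \<exists>F v. finite F \<and> F \<subseteq> R' \<and> (\<forall>\<gamma>\<in>F. v \<gamma> \<in> U \<gamma>) \<and> x = sum v F"
  unfolding Lc_eq using span_UN[of R' U x] U_sub by blast

lemma rootsp_mono: "Lc \<subseteq> L \<Longrightarrow> rootsp sc Lc br K \<beta> \<subseteq> rootsp sc L br K \<beta>"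
  by (auto simp: rootsp_def)

lemma Lc_eigvec:
  assumes x: "x \<in> rootsp sc Lc br H' \<beta>" and x0: "x \<noteq> 0"
  shows "\<exists>\<gamma>\<in>R'. (\<forall>h\<in>H'. \<beta> h = \<gamma> h) \<and> x \<in> U \<gamma>"
proof -
  have xLc: "x \<in> Lc" using x by (simp add: rootsp_def)
  obtain F v where F: "finite F" "F \<subseteq> R'" "\<forall>\<gamma>\<in>F. v \<gamma> \<in> U \<gamma>" "x = sum v F"
    using Lc_decomp[OF xLc] by blast
  have ve: "\<forall>\<gamma>\<in>F. v \<gamma> \<in> rootsp sc L br H' ((\<lambda>i. i) \<gamma>)" using F U_eig by blast
  have d: "\<forall>i\<in>F. \<forall>j\<in>F. i \<noteq> j \<longrightarrow> (\<exists>h\<in>H'. i h \<noteq> j h)" using F R'dist by blast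
  have xe: "x \<in> rootsp sc L br H' \<beta>" using x rootsp_mono[OF Lc_L] by blast
  from ECL[OF H'_L F(1) ve d F(4) xe x0] obtain i where
    i: "i \<in> F" "\<forall>h\<in>H'. \<beta> h = i h" "x = v i" by blast
  then show ?thesis using F by blast
qed

lemma rootsp_c_restr:
  assumes g: "\<gamma> \<in> R'"
  shows "rootsp sc Lc br H' (restr H' \<gamma>) = U \<gamma>"
proof
  show "U \<gamma> \<subseteq> rootsp sc Lc br H' (restr H' \<gamma>)"
    using U_Lc[OF g] U_eig[OF g] by (auto simp: rootsp_def restr_def)
next
  show "rootsp sc Lc br H' (restr H' \<gamma>) \<subseteq> U \<gamma>"
  proof
    fix x assume x: "x \<in> rootsp sc Lc br H' (restr H' \<gamma>)"
    show "x \<in> U \<gamma>"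
    proof (cases "x = 0")
      case True then show ?thesis using U_sub subspace_0 by blast
    next
      case False
      from Lc_eigvec[OF x False] obtain \<delta> where d: "\<delta> \<in> R'" "\<forall>h\<in>H'. restr H' \<gamma> h = \<delta> h" "x \<in> U \<delta>"
        by blast
      have "\<forall>h\<in>H'. \<gamma> h = \<delta> h" using d(2) by (simp add: restr_def)
      then have "\<gamma> = \<delta>" using restr_inj[OF g d(1)] by blast
      then show ?thesis using d by simp
    qed
  qed
qed

lemma tvec0: "tvec B H (\<lambda>_. 0) = 0"
  using tvec_uniq[OF H_sub order_refl H_nd, of 0 "\<lambda>_. 0"] H_sub subspace_0 H_L B_0r by auto

lemma H'_nz: "\<exists>t\<in>H'. t \<noteq> 0"
proof -
  have "ip (\<lambda>_. 0) (\<lambda>_. 0) = 0" using tvec0 B_0r L0 by (simp add: ipf_def)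
  then have "(\<lambda>_. 0) \<in> isot ip R'" using R'0 by (simp add: isot_def)
  then obtain a where a: "a \<in> nonisot ip R'" using R'noniso by (auto simp: isot_nonisolated_def)
  have "tvec B H a \<noteq> 0"
  proof
    assume "tvec B H a = 0"
    then have "ip a a = 0" using B_0r L0 by (simp add: ipf_def)
    then show False using a by (simp add: nonisot_def)
  qed
  then show ?thesis using tcov[OF a] by blast
qed

lemma U_nz: "\<gamma> \<in> R' \<Longrightarrow> U \<gamma> \<noteq> {0}"
proof (cases "\<gamma> = (\<lambda>_. 0)")
  case True then show ?thesis using H'_nz by (auto simp: U_def)
next
  case False
  assume "\<gamma> \<in> R'"
  then have "E \<gamma> \<noteq> {0}" using R'R by (auto simp: roots_def)
  then show ?thesis using False by (simp add: U_def)
qed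

lemma rootsp_has0: "K \<subseteq> L \<Longrightarrow> M \<subseteq> L \<Longrightarrow> subspace M \<Longrightarrow> 0 \<in> rootsp sc M br K \<beta>"
  using br_0r subspace_0 by (auto simp: rootsp_def)

lemma roots_c: "roots sc Lc br H' = restr H' ` R'"
proof
  show "roots sc Lc br H' \<subseteq> restr H' ` R'"
  proof
    fix \<beta> assume b: "\<beta> \<in> roots sc Lc br H'"
    then have bd: "\<beta> \<in> hdual sc H'" and ne: "rootsp sc Lc br H' \<beta> \<noteq> {0}" by (auto simp: roots_def)
    have "0 \<in> rootsp sc Lc br H' \<beta>" using rootsp_has0[OF H'_L Lc_L Lc_sub] .
    then obtain x where x: "x \<in> rootsp sc Lc br H' \<beta>" "x \<noteq> 0" using ne by blast
    from Lc_eigvec[OF x] obtain \<gamma> where g: "\<gamma> \<in> R'" "\<forall>h\<in>H'. \<beta> h = \<gamma> h" by blast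
    have "\<beta> = restr H' \<gamma>"
      using hdual_eqK[OF bd restr_hdual] g R'_hdual by (auto simp: restr_def)
    then show "\<beta> \<in> restr H' ` R'" using g by blast
  qed
next
  show "restr H' ` R' \<subseteq> roots sc Lc br H'"
    using rootsp_c_restr U_nz restr_hdual R'_hdual by (auto simp: roots_def)
qed

end

context ctx
begin

lemma gen_br:
  assumes G: "span G \<subseteq> L" and S: "subspace S"
    and gen: "\<And>x y. x \<in> G \<Longrightarrow> y \<in> G \<Longrightarrow> br x y \<in> S"
    and x: "x \<in> span G" and y: "y \<in> span G"
  shows "br x y \<in> S"
proof -
  have GL: "G \<subseteq> L" using G span_superset by blast
  have one: "br x y \<in> S" if x: "x \<in> G" and y: "y \<in> span G" for x y
  proof -
    have "y \<in> span G \<and> br x y \<in> S" using y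
    proof (induction rule: span_induct_alt)
      case base then show ?case using x GL br_0r subspace_0[OF S] span_zero by auto
    next
      case (step c z w)
      have L': "x \<in> L" "z \<in> L" "w \<in> L" using x GL step G by auto
      have "br x (sc c z + w) = sc c (br x z) + br x w"
        using L' by (simp add: br_addr L_scale br_scr)
      moreover have "br x z \<in> S" using gen x step by blast
      ultimately have "br x (sc c z + w) \<in> S" using step S by (simp add: subspace_add subspace_scale)
      moreover have "sc c z + w \<in> span G" by (rule span_add[OF span_scale[OF span_base]]) (use step in auto)
      ultimately show ?case by blast
    qed
    then show ?thesis by blast
  qed
  have "x \<in> span G \<and> br x y \<in> S" using x
  proof (induction rule: span_induct_alt)
    case base then show ?case using y G br_0l subspace_0[OF S] span_zero by auto
  next
    case (step c z w)
    have L': "y \<in> L" "z \<in> L" "w \<in> L" using y GL step G by auto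
    have "br (sc c z + w) y = sc c (br z y) + br w y"
      using L' by (simp add: br_addl L_scale br_scl)
    moreover have "br z y \<in> S" using one step y by blast
    ultimately have "br (sc c z + w) y \<in> S" using step S by (simp add: subspace_add subspace_scale)
    moreover have "sc c z + w \<in> span G" by (rule span_add[OF span_scale[OF span_base]]) (use step in auto)
    ultimately show ?case by blast
  qed
  then show ?thesis by blast
qed

end

context cctx
begin

lemma U_E: "U \<gamma> \<subseteq> E \<gamma>" using H'_H E0 by (auto simp: U_def)

lemma E_has0: "0 \<in> E \<beta>" using rootsp_has0[OF H_L order_refl L_sub] .

lemma E_notroot: "\<beta> \<in> hdual sc H \<Longrightarrow> \<beta> \<notin> R \<Longrightarrow> E \<beta> = {0}"
  using E_has0 by (auto simp: roots_def)

lemma br_gen: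
  assumes a: "\<alpha> \<in> R'" and b: "\<beta> \<in> R'" and x: "x \<in> U \<alpha>" and y: "y \<in> U \<beta>"
  shows "br x y \<in> Lc"
proof -
  have xL: "x \<in> L" and yL: "y \<in> L" using x y U_L by auto
  show ?thesis
  proof (cases "\<alpha> = (\<lambda>_. 0)")
    case True
    then have xH: "x \<in> H'" using x by (simp add: U_def)
    have "br x y = sc (\<beta> x) y" using U_eig[OF b] y xH by (auto simp: rootsp_def)
    then show ?thesis using U_Lc[OF b] y Lc_sub subspace_scale by auto
  next
    case aF: False
    show ?thesis
    proof (cases "\<beta> = (\<lambda>_. 0)")
      case True
      then have yH: "y \<in> H'" using y by (simp add: U_def)
      have "br y x = sc (\<alpha> y) x" using U_eig[OF a] x yH by (auto simp: rootsp_def)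
      then have "br x y = - sc (\<alpha> y) x" using br_anti[OF xL yL] by simp
      then show ?thesis using U_Lc[OF a] x Lc_sub subspace_scale subspace_neg by fastforce
    next
      case bF: False
      have xE: "x \<in> E \<alpha>" and yE: "y \<in> E \<beta>" using x y aF bF by (auto simp: U_def)
      define s where "s = (\<lambda>h. \<alpha> h + \<beta> h)"
      have sE: "br x y \<in> E s" using E_br[OF xE yE] by (simp add: s_def)
      have sd: "s \<in> hdual sc H" using hdual_lin[of \<alpha> H \<beta> 1 1] a b R'_hdual by (auto simp: s_def)
      show ?thesis
      proof (cases "s = (\<lambda>_. 0)")
        case True
        then have bxyH: "br x y \<in> H" using sE E0 by simp
        define t where "t = tvec B H \<alpha>"
        have tH': "t \<in> H'" and tr: "\<forall>h\<in>H. \<alpha> h = B h t" using tR[OF a] by (auto simp: t_def)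
        have tH: "t \<in> H" using tH' H'_H by auto
        have "br x y - sc (B x y) t = 0"
        proof (rule B_H_nondeg)
          show dH: "br x y - sc (B x y) t \<in> H" using bxyH tH H_sub by (intro subspace_diff subspace_scale) auto
          fix h assume h: "h \<in> H"
          have hL: "h \<in> L" using h H_L by auto
          have tL: "t \<in> L" using tH H_L by auto
          have "B (br x y - sc (B x y) t) h = B h (br x y - sc (B x y) t)"
            using dH H_L hL B_sym by auto
          also have "\<dots> = B h (br x y) - B x y * B h t"
            using hL tL br_L[OF xL yL] by (simp add: B_diffr L_scale B_scr)
          also have "B h (br x y) = B (br h x) y" using B_inv[OF hL xL yL] by simp
          also have "br h x = sc (\<alpha> h) x" using xE h by (simp add: rootsp_def)
          also have "B (sc (\<alpha> h) x) y = \<alpha> h * B x y" using B_scl[OF xL yL] .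
          also have "B h t = \<alpha> h" using tr h by simp
          finally show "B (br x y - sc (B x y) t) h = 0" by simp
        qed
        then have "br x y = sc (B x y) t" by simp
        moreover have "sc (B x y) t \<in> Lc"
          using tH' U_Lc[OF R'0] Lc_sub subspace_scale by (auto simp: U_def)
        ultimately show ?thesis by simp
      next
        case sF: False
        show ?thesis
        proof (cases "s \<in> R")
          case True
          then have "s \<in> R'" using R'closed[OF a b] by (simp add: s_def)
          then have "E s \<subseteq> Lc" using U_Lc[of s] sF by (simp add: U_def)
          then show ?thesis using sE by blast
        next
          case False
          then have "br x y = 0" using E_notroot[OF sd] sE by auto
          then show ?thesis using Lc_sub subspace_0 by simp
        qed
      qed
    qed
  qed
qed

lemma Lc_br: "x \<in> Lc \<Longrightarrow> y \<in> Lc \<Longrightarrow> br x y \<in> Lc"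
proof -
  assume x: "x \<in> Lc" and y: "y \<in> Lc"
  show ?thesis
  proof (rule gen_br[of "\<Union>\<gamma>\<in>R'. U \<gamma>"])
    show "span (\<Union>\<gamma>\<in>R'. U \<gamma>) \<subseteq> L" using Lc_L Lc_eq by simp
    show "subspace Lc" by (rule Lc_sub)
    show "x \<in> span (\<Union>\<gamma>\<in>R'. U \<gamma>)" "y \<in> span (\<Union>\<gamma>\<in>R'. U \<gamma>)" using x y Lc_eq by auto
    fix a b assume "a \<in> (\<Union>\<gamma>\<in>R'. U \<gamma>)" "b \<in> (\<Union>\<gamma>\<in>R'. U \<gamma>)"
    then show "br a b \<in> Lc" using br_gen by blast
  qed
qed

lemma lie_c: "lie_algebra sc Lc br"
  using LA Lc_L Lc_sub Lc_br unfolding lie_algebra_def by (auto simp: subset_iff)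

lemma Lc_nd:
  assumes x: "x \<in> Lc" and o: "\<forall>y\<in>Lc. B x y = 0"
  shows "x = 0"
proof -
  obtain F v where F: "finite F" "F \<subseteq> R'" "\<forall>\<gamma>\<in>F. v \<gamma> \<in> U \<gamma>" "x = sum v F"
    using Lc_decomp[OF x] by blast
  have vL: "\<And>\<gamma>. \<gamma> \<in> F \<Longrightarrow> v \<gamma> \<in> L" using F U_L by blast
  have comp: "v \<gamma> = 0" if g: "\<gamma> \<in> F" for \<gamma>
  proof -
    have gR: "\<gamma> \<in> R'" using g F by auto
    define g' where "g' = (\<lambda>h. - \<gamma> h)"
    have g'R: "g' \<in> R'" using R'neg[OF gR] by (simp add: g'_def)
    have gd: "\<gamma> \<in> hdual sc H" using gR R'_hdual by auto
    have orth1: "B (v \<gamma>) y = 0" if yU: "y \<in> U g'" for y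
    proof -
      have y: "y \<in> E g'" using yU U_E by blast
      have yL: "y \<in> L" using y rootsp_L by auto
      have others: "B (v \<delta>) y = 0" if d: "\<delta> \<in> F" "\<delta> \<noteq> \<gamma>" for \<delta>
      proof -
        have dd: "\<delta> \<in> hdual sc H" using d F R'_hdual by auto
        obtain h where h: "h \<in> H" "\<delta> h \<noteq> \<gamma> h" using hdual_distinct[OF dd gd d(2)] by blast
        have "(\<delta> h + g' h) * B (v \<delta>) y = 0" using E_orth[OF _ y h(1)] U_E F d by blast
        moreover have "\<delta> h + g' h \<noteq> 0" using h by (simp add: g'_def)
        ultimately show ?thesis by simp
      qed
      have "B (v \<gamma>) y = B (v \<gamma>) y + (\<Sum>\<delta>\<in>F - {\<gamma>}. B (v \<delta>) y)"
        using others by simp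
      also have "\<dots> = (\<Sum>\<delta>\<in>F. B (v \<delta>) y)" using F(1) g by (simp add: sum.remove)
      also have "\<dots> = B x y" using F(4) B_suml[OF yL, of F v] vL by simp
      also have "\<dots> = 0" using o U_Lc[OF g'R] yU by auto
      finally show ?thesis .
    qed
    show ?thesis
    proof (cases "\<gamma> = (\<lambda>_. 0)")
      case True
      then have vH: "v \<gamma> \<in> H'" using F g by (auto simp: U_def)
      have "g' = (\<lambda>_. 0)" using True by (simp add: g'_def)
      have "\<forall>y\<in>H'. B (v \<gamma>) y = 0"
      proof
        fix y assume "y \<in> H'"
        then have "y \<in> U g'" using \<open>g' = (\<lambda>_. 0)\<close> by (simp add: U_def)
        then show "B (v \<gamma>) y = 0" by (rule orth1)
      qed
      then show ?thesis using H'_nd vH by blast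
    next
      case False
      have vE: "v \<gamma> \<in> E \<gamma>" using F g U_E by blast
      show ?thesis
      proof (rule B_nondeg)
        show "v \<gamma> \<in> L" using vL g by blast
        fix z assume "z \<in> L"
        then obtain G w where G: "finite G" "G \<subseteq> hdual sc H" "\<forall>\<beta>\<in>G. w \<beta> \<in> E \<beta>" "z = sum w G"
          using L_decomp by blast
        have wL: "\<And>\<beta>. \<beta> \<in> G \<Longrightarrow> w \<beta> \<in> L" using G rootsp_L by blast
        have "B (v \<gamma>) (w \<beta>) = 0" if bG: "\<beta> \<in> G" for \<beta>
        proof (cases "\<beta> = g'")
          case True
          have "g' \<noteq> (\<lambda>_. 0)" using False by (auto simp: g'_def fun_eq_iff)
          then have "w \<beta> \<in> U g'" using True G bG by (simp add: U_def)
          then show ?thesis using orth1 by blast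
        next
          case False
          have g'd: "g' \<in> hdual sc H" using g'R R'_hdual by auto
          obtain h where h: "h \<in> H" "\<beta> h \<noteq> g' h" using hdual_distinct[OF _ g'd False] G bG by blast
          have "(\<gamma> h + \<beta> h) * B (v \<gamma>) (w \<beta>) = 0" using E_orth[OF vE _ h(1)] G bG by blast
          moreover have "\<gamma> h + \<beta> h \<noteq> 0" using h by (auto simp: g'_def add_eq_0_iff2)
          ultimately show ?thesis by simp
        qed
        then show "B (v \<gamma>) z = 0" using G(4) B_sumr[OF vL[OF g], of G w] wL by simp
      qed
    qed
  qed
  then show ?thesis using F by simp
qed

lemma ea1_c: "ea1_form sc Lc br B"
  using EA1 Lc_L Lc_nd unfolding ea1_form_def by (auto simp: subset_iff)

lemma H'_Lc: "H' \<subseteq> Lc" using U_Lc[OF R'0] by (simp add: U_def)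

lemma H'_br: "x \<in> H' \<Longrightarrow> y \<in> H' \<Longrightarrow> br x y \<in> H'"
  using H_abel H'_H H'_sub subspace_0 by (auto simp: subset_iff)

lemma H'_fin: "\<exists>F. finite F \<and> F \<subseteq> H' \<and> span F = H'"
  using fin_dim_sub[OF H'_sub H'_H] by blast

lemma Lc_span: "Lc = span (\<Union>\<beta>\<in>hdual sc H'. rootsp sc Lc br H' \<beta>)"
proof
  show "Lc \<subseteq> span (\<Union>\<beta>\<in>hdual sc H'. rootsp sc Lc br H' \<beta>)"
  proof -
    have "(\<Union>\<gamma>\<in>R'. U \<gamma>) \<subseteq> (\<Union>\<beta>\<in>hdual sc H'. rootsp sc Lc br H' \<beta>)"
    proof
      fix x assume "x \<in> (\<Union>\<gamma>\<in>R'. U \<gamma>)"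
      then obtain \<gamma> where g: "\<gamma> \<in> R'" "x \<in> U \<gamma>" by blast
      then have "x \<in> rootsp sc Lc br H' (restr H' \<gamma>)" using rootsp_c_restr by simp
      moreover have "restr H' \<gamma> \<in> hdual sc H'" using restr_hdual g R'_hdual by auto
      ultimately show "x \<in> (\<Union>\<beta>\<in>hdual sc H'. rootsp sc Lc br H' \<beta>)" by blast
    qed
    then show ?thesis unfolding Lc_eq by (rule span_mono)
  qed
next
  show "span (\<Union>\<beta>\<in>hdual sc H'. rootsp sc Lc br H' \<beta>) \<subseteq> Lc"
    by (rule span_minimal[OF _ Lc_sub]) (auto simp: rootsp_def)
qed

lemma Lc_indep:
  "\<forall>F x. finite F \<and> F \<subseteq> hdual sc H' \<and> (\<forall>\<alpha>\<in>F. x \<alpha> \<in> rootsp sc Lc br H' \<alpha>) \<and> sum x F = 0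
            \<longrightarrow> (\<forall>\<alpha>\<in>F. x \<alpha> = 0)"
proof (intro allI impI)
  fix F x assume a: "finite F \<and> F \<subseteq> hdual sc H' \<and> (\<forall>\<alpha>\<in>F. x \<alpha> \<in> rootsp sc Lc br H' \<alpha>) \<and> sum x F = 0"
  have v: "\<forall>i\<in>F. x i \<in> rootsp sc L br H' ((\<lambda>i. i) i)" using a rootsp_mono[OF Lc_L] by blast
  have d: "\<forall>i\<in>F. \<forall>j\<in>F. i \<noteq> j \<longrightarrow> (\<exists>h\<in>H'. i h \<noteq> j h)" using a hdual_distinct by blast
  show "\<forall>\<alpha>\<in>F. x \<alpha> = 0" using GI[OF H'_L _ v d] a by blast
qed

lemma Lc_E0: "rootsp sc Lc br H' (\<lambda>_. 0) = H'"
proof -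
  have "restr H' (\<lambda>_. 0) = (\<lambda>_. 0)" by (simp add: restr_def fun_eq_iff)
  then show ?thesis using rootsp_c_restr[OF R'0] by (simp add: U_def)
qed

end

context cctx
begin

lemma ip0: "ip (\<lambda>_. 0) (\<lambda>_. 0) = 0" using tvec0 B_0r L0 by (simp add: ipf_def)

lemma EA3_c: "\<forall>\<alpha>\<in>nonisot (ipf B H') (roots sc Lc br H'). \<forall>x\<in>rootsp sc Lc br H' \<alpha>. \<forall>y\<in>Lc.
         \<exists>n. (br x ^^ n) y = 0"
proof (intro ballI)
  fix ac x y assume ac: "ac \<in> nonisot (ipf B H') (roots sc Lc br H')"
    and x: "x \<in> rootsp sc Lc br H' ac" and y: "y \<in> Lc"
  obtain a where a: "a \<in> R'" "ac = restr H' a" using ac roots_c by (auto simp: nonisot_def)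
  have "ip a a \<noteq> 0" using ac a ip_transfer[OF a(1) a(1)] by (simp add: nonisot_def)
  then have an: "a \<in> nonisot ip R" and a0: "a \<noteq> (\<lambda>_. 0)" using a R'R ip0 by (auto simp: nonisot_def)
  have "x \<in> E a" using x rootsp_c_restr[OF a(1)] a a0 by (simp add: U_def)
  then show "\<exists>n. (br x ^^ n) y = 0" using EA3[OF an] y Lc_L by blast
qed

lemma disc_c: "discrete_dual H' (restr H' ` R')"
  unfolding discrete_dual_def
proof
  fix ac assume "ac \<in> restr H' ` R'"
  then obtain a where a: "a \<in> R'" "ac = restr H' a" by blast
  have "\<exists>F \<epsilon>. finite F \<and> F \<subseteq> H \<and> \<epsilon> > 0 \<and>
        (\<forall>\<beta>\<in>R'. (\<forall>h\<in>F. cmod (\<beta> h - a h) < \<epsilon>) \<longrightarrow> \<beta> = a)"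
    using R'disc a(1) unfolding discrete_dual_def by (rule bspec)
  then obtain F0 \<epsilon> where F0: "finite F0" "F0 \<subseteq> H" "\<epsilon> > 0"
    and cl: "\<forall>\<beta>\<in>R'. (\<forall>h\<in>F0. cmod (\<beta> h - a h) < \<epsilon>) \<longrightarrow> \<beta> = a"
    by (elim exE conjE) simp
  have "\<forall>f\<in>F0. \<exists>p\<in>H'. \<forall>h\<in>H'. B h f = B h p"
  proof
    fix f assume f: "f \<in> F0"
    then have fL: "f \<in> L" using F0 H_L by auto
    show "\<exists>p\<in>H'. \<forall>h\<in>H'. B h f = B h p"
    proof (rule riesz_sub[OF H'_sub H'_H H'_nd])
      show "\<forall>x\<in>H'. \<forall>y\<in>H'. B (x + y) f = B x f + B y f" using H'_L fL by (auto simp: B_addl subset_iff)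
      show "\<forall>c. \<forall>x\<in>H'. B (sc c x) f = c * B x f" using H'_L fL by (auto simp: B_scl subset_iff)
    qed
  qed
  then obtain p where p: "\<forall>f\<in>F0. p f \<in> H' \<and> (\<forall>h\<in>H'. B h f = B h (p f))" by metis
  have key: "\<beta> (p f) = \<beta> f" if b: "\<beta> \<in> R'" and f: "f \<in> F0" for \<beta> f
  proof -
    define t where "t = tvec B H \<beta>"
    have t: "t \<in> H'" "\<forall>h\<in>H. \<beta> h = B h t" using tR[OF b] by (auto simp: t_def)
    have fH: "f \<in> H" using f F0 by auto
    have pH: "p f \<in> H" using p f H'_H by auto
    have L': "f \<in> L" "p f \<in> L" "t \<in> L" using fH pH t H'_L H_L by auto
    have "\<beta> f = B f t" using t fH by simp
    also have "\<dots> = B t f" using L' B_sym by metis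
    also have "\<dots> = B t (p f)" using p f t by simp
    also have "\<dots> = B (p f) t" using L' B_sym by metis
    also have "\<dots> = \<beta> (p f)" using t pH by simp
    finally show ?thesis by simp
  qed
  show "\<exists>F \<epsilon>. finite F \<and> F \<subseteq> H' \<and> \<epsilon> > 0 \<and>
        (\<forall>\<beta>\<in>restr H' ` R'. (\<forall>h\<in>F. cmod (\<beta> h - ac h) < \<epsilon>) \<longrightarrow> \<beta> = ac)"
  proof (intro exI conjI ballI impI)
    show "finite (p ` F0)" using F0 by simp
    show "p ` F0 \<subseteq> H'" using p by auto
    show "\<epsilon> > 0" by fact
    fix bc assume bc: "bc \<in> restr H' ` R'" and close: "\<forall>h\<in>p ` F0. cmod (bc h - ac h) < \<epsilon>"
    obtain b where b: "b \<in> R'" "bc = restr H' b" using bc by blast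
    have "\<forall>h\<in>F0. cmod (b h - a h) < \<epsilon>"
    proof
      fix f assume f: "f \<in> F0"
      have "cmod (bc (p f) - ac (p f)) < \<epsilon>" using close f by blast
      moreover have "bc (p f) = b f" "ac (p f) = a f" using key[OF b(1) f] key[OF a(1) f] p f a b
        by (auto simp: restr_def)
      ultimately show "cmod (b f - a f) < \<epsilon>" by simp
    qed
    then have "b = a" using cl b by blast
    then show "bc = ac" using a b by simp
  qed
qed

lemma nonisot_c: "nonisot (ipf B H') (restr H' ` R') = restr H' ` nonisot ip R'"
  using ip_transfer by (auto simp: nonisot_def)

lemma isot_c: "isot (ipf B H') (restr H' ` R') = restr H' ` isot ip R'"
  using ip_transfer by (auto simp: isot_def)

lemma conn_c: "connected_roots (ipf B H') (restr H' ` R')"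
  unfolding connected_roots_def
proof
  assume "\<exists>A C. A \<noteq> {} \<and> C \<noteq> {} \<and> A \<union> C = nonisot (ipf B H') (restr H' ` R') \<and>
     (\<forall>a\<in>A. \<forall>b\<in>C. ipf B H' a b = 0)"
  then obtain A C where AC: "A \<noteq> {}" "C \<noteq> {}" "A \<union> C = restr H' ` nonisot ip R'"
    and o: "\<forall>a\<in>A. \<forall>b\<in>C. ipf B H' a b = 0" using nonisot_c by auto
  define A' where "A' = {a \<in> nonisot ip R'. restr H' a \<in> A}"
  define C' where "C' = {a \<in> nonisot ip R'. restr H' a \<in> C}"
  have NR: "nonisot ip R' \<subseteq> R'" by (auto simp: nonisot_def)
  have AA: "A \<subseteq> restr H' ` nonisot ip R'" and CC: "C \<subseteq> restr H' ` nonisot ip R'" using AC(3) by auto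
  have "A' \<noteq> {}"
  proof -
    obtain x where x: "x \<in> A" using AC(1) by auto
    then obtain a0 where "a0 \<in> nonisot ip R'" "x = restr H' a0" using AA by auto
    then have "a0 \<in> A'" using x by (simp add: A'_def)
    then show ?thesis by auto
  qed
  moreover have "C' \<noteq> {}"
  proof -
    obtain x where x: "x \<in> C" using AC(2) by auto
    then obtain a0 where "a0 \<in> nonisot ip R'" "x = restr H' a0" using CC by auto
    then have "a0 \<in> C'" using x by (simp add: C'_def)
    then show ?thesis by auto
  qed
  moreover have "A' \<union> C' = nonisot ip R'"
  proof
    show "A' \<union> C' \<subseteq> nonisot ip R'" by (auto simp: A'_def C'_def)
    show "nonisot ip R' \<subseteq> A' \<union> C'"
    proof
      fix a assume a: "a \<in> nonisot ip R'"
      then have "restr H' a \<in> A \<union> C" using AC(3) by auto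
      then show "a \<in> A' \<union> C'" using a by (auto simp: A'_def C'_def)
    qed
  qed
  moreover have "\<forall>a\<in>A'. \<forall>b\<in>C'. ip a b = 0"
  proof (intro ballI)
    fix a b assume a: "a \<in> A'" and b: "b \<in> C'"
    have "a \<in> R'" "b \<in> R'" using a b NR by (auto simp: A'_def C'_def)
    then have "ip a b = ipf B H' (restr H' a) (restr H' b)" using ip_transfer by simp
    also have "\<dots> = 0" using o a b by (auto simp: A'_def C'_def)
    finally show "ip a b = 0" .
  qed
  ultimately show False using R'conn unfolding connected_roots_def by blast
qed

lemma nonisol_c: "isot_nonisolated (ipf B H') (restr H' ` R')"
  unfolding isot_nonisolated_def
proof
  fix sc' assume "sc' \<in> isot (ipf B H') (restr H' ` R')"
  then obtain s where s: "s \<in> isot ip R'" "sc' = restr H' s" using isot_c by auto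
  then obtain a where a: "a \<in> nonisot ip R'" "(\<lambda>h. a h + s h) \<in> R'"
    using R'noniso by (auto simp: isot_nonisolated_def)
  have "restr H' a \<in> nonisot (ipf B H') (restr H' ` R')" using a nonisot_c by auto
  moreover have "(\<lambda>h. restr H' a h + sc' h) = restr H' (\<lambda>h. a h + s h)"
    using s by (auto simp: restr_def fun_eq_iff)
  ultimately show "\<exists>\<alpha>\<in>nonisot (ipf B H') (restr H' ` R'). (\<lambda>h. \<alpha> h + sc' h) \<in> restr H' ` R'"
    using a by auto
qed

lemma hdual_sum: "G \<subseteq> hdual sc H \<Longrightarrow> (\<lambda>h. \<Sum>\<sigma>\<in>G. c \<sigma> * \<sigma> h) \<in> hdual sc H"
proof -
  assume G: "G \<subseteq> hdual sc H"
  have l: "\<And>\<sigma>. \<sigma> \<in> G \<Longrightarrow> (\<forall>x\<in>H. \<forall>y\<in>H. \<sigma> (x + y) = \<sigma> x + \<sigma> y) \<and>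
      (\<forall>k. \<forall>x\<in>H. \<sigma> (sc k x) = k * \<sigma> x) \<and> (\<forall>x. x \<notin> H \<longrightarrow> \<sigma> x = 0)"
    using G by (auto simp: hdual_def)
  show ?thesis unfolding hdual_def
  proof (intro CollectI conjI ballI allI impI)
    fix x y assume xy: "x \<in> H" "y \<in> H"
    have "(\<Sum>\<sigma>\<in>G. c \<sigma> * \<sigma> (x + y)) = (\<Sum>\<sigma>\<in>G. c \<sigma> * \<sigma> x + c \<sigma> * \<sigma> y)"
    proof (rule sum.cong[OF refl])
      fix \<sigma> assume "\<sigma> \<in> G"
      then have "\<sigma> (x + y) = \<sigma> x + \<sigma> y" using l xy by blast
      then show "c \<sigma> * \<sigma> (x + y) = c \<sigma> * \<sigma> x + c \<sigma> * \<sigma> y" by (simp add: distrib_left)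
    qed
    then show "(\<Sum>\<sigma>\<in>G. c \<sigma> * \<sigma> (x + y)) = (\<Sum>\<sigma>\<in>G. c \<sigma> * \<sigma> x) + (\<Sum>\<sigma>\<in>G. c \<sigma> * \<sigma> y)"
      by (simp add: sum.distrib)
  next
    fix k x assume x: "x \<in> H"
    have "(\<Sum>\<sigma>\<in>G. c \<sigma> * \<sigma> (sc k x)) = (\<Sum>\<sigma>\<in>G. k * (c \<sigma> * \<sigma> x))"
    proof (rule sum.cong[OF refl])
      fix \<sigma> assume "\<sigma> \<in> G"
      then have "\<sigma> (sc k x) = k * \<sigma> x" using l x by blast
      then show "c \<sigma> * \<sigma> (sc k x) = k * (c \<sigma> * \<sigma> x)" by simp
    qed
    then show "(\<Sum>\<sigma>\<in>G. c \<sigma> * \<sigma> (sc k x)) = k * (\<Sum>\<sigma>\<in>G. c \<sigma> * \<sigma> x)"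
      by (simp add: sum_distrib_left)
  next
    fix x assume x: "x \<notin> H"
    have z: "\<And>\<sigma>. \<sigma> \<in> G \<Longrightarrow> \<sigma> x = 0" using l x by blast
    show "(\<Sum>\<sigma>\<in>G. c \<sigma> * \<sigma> x) = 0"
    proof (rule sum.neutral, rule ballI)
      fix \<sigma> assume "\<sigma> \<in> G"
      then show "c \<sigma> * \<sigma> x = 0" using z by simp
    qed
  qed
qed

lemma reduced_c: "reduced_quot (ipf B H') (restr H' ` R')"
  unfolding reduced_quot_def
proof (intro ballI notI)
  fix ac bc assume ac: "ac \<in> nonisot (ipf B H') (restr H' ` R')" and bc: "bc \<in> nonisot (ipf B H') (restr H' ` R')"
    and ins: "(\<lambda>h. bc h - 2 * ac h) \<in> rspan (isot (ipf B H') (restr H' ` R'))"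
  obtain a where a: "a \<in> nonisot ip R'" "ac = restr H' a" using ac nonisot_c by auto
  obtain b where b: "b \<in> nonisot ip R'" "bc = restr H' b" using bc nonisot_c by auto
  have aR: "a \<in> R'" and bR: "b \<in> R'" using a b by (auto simp: nonisot_def)
  obtain G c where G: "finite G" "G \<subseteq> restr H' ` isot ip R'"
    and eq: "(\<lambda>h. bc h - 2 * ac h) = (\<lambda>h. \<Sum>g\<in>G. complex_of_real (c g) * g h)"
    using ins isot_c unfolding rspan_def by auto
  define G0 where "G0 = {s \<in> isot ip R'. restr H' s \<in> G}"
  have IR: "isot ip R' \<subseteq> R'" by (auto simp: isot_def)
  have G0R: "G0 \<subseteq> R'" using IR by (auto simp: G0_def)
  have injG0: "inj_on (restr H') G0" using inj_on_subset[OF restr_inj_on G0R] .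
  have imG0: "restr H' ` G0 = G" using G by (auto simp: G0_def)
  have finG0: "finite G0" using finite_imageD[of "restr H'" G0] imG0 G injG0 by simp
  define f where "f = (\<lambda>h. \<Sum>s\<in>G0. complex_of_real (c (restr H' s)) * s h)"
  have G0hd: "G0 \<subseteq> hdual sc H" using G0R R'_hdual by auto
  have fin: "f \<in> rspan (isot ip R)"
    unfolding rspan_def f_def
    using finG0 R'R by (intro CollectI exI[of _ G0] exI[of _ "\<lambda>s. c (restr H' s)"])
      (auto simp: G0_def isot_def)
  have ad: "a \<in> hdual sc H" and bd: "b \<in> hdual sc H" using aR bR R'_hdual by auto
  have "(\<lambda>h. b h - 2 * a h) = f"
  proof (rule agree)
    have "(\<lambda>h. 1 * b h + (-2) * a h) \<in> hdual sc H" by (rule hdual_lin[OF bd ad])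
    then show "(\<lambda>h. b h - 2 * a h) \<in> hdual sc H" by simp
    show "f \<in> hdual sc H" unfolding f_def by (rule hdual_sum[OF G0hd])
    define ta where "ta = tvec B H a"
    define tb where "tb = tvec B H b"
    have ta: "ta \<in> H'" "\<forall>h\<in>H. a h = B h ta" using tR[OF aR] by (auto simp: ta_def)
    have tb: "tb \<in> H'" "\<forall>h\<in>H. b h = B h tb" using tR[OF bR] by (auto simp: tb_def)
    show "tb + sc (-2) ta \<in> H'" using ta tb H'_sub by (intro subspace_add subspace_scale) auto
    show "\<forall>h\<in>H. b h - 2 * a h = B h (tb + sc (-2) ta)"
    proof
      fix h assume h: "h \<in> H"
      have L': "h \<in> L" "ta \<in> L" "tb \<in> L" using h ta tb H_L H'_L by auto
      show "b h - 2 * a h = B h (tb + sc (-2) ta)"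
      proof -
        have "B h (tb + sc (-2) ta) = B h tb + (-2) * B h ta"
          using L' by (simp only: B_addr[OF L'(3) L_scale[OF L'(2)] L'(1)] B_scr[OF L'(1) L'(2)])
        then show ?thesis using ta tb h by simp
      qed
    qed
    define tf where "tf = (\<Sum>s\<in>G0. sc (complex_of_real (c (restr H' s))) (tvec B H s))"
    show "tf \<in> H'" unfolding tf_def using tR G0R H'_sub by (intro subspace_sum subspace_scale) auto
    show "\<forall>h\<in>H. f h = B h tf"
    proof
      fix h assume h: "h \<in> H"
      have hL: "h \<in> L" using h H_L by auto
      have tL: "\<And>s. s \<in> G0 \<Longrightarrow> tvec B H s \<in> L" using tR G0R H'_L by blast
      have "B h tf = (\<Sum>s\<in>G0. B h (sc (complex_of_real (c (restr H' s))) (tvec B H s)))"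
        unfolding tf_def using tL by (intro B_sumr[OF hL] L_scale) auto
      also have "\<dots> = (\<Sum>s\<in>G0. complex_of_real (c (restr H' s)) * s h)"
        using tL tR G0R h hL by (intro sum.cong) (auto simp: B_scr)
      finally show "f h = B h tf" by (simp add: f_def)
    qed
    show "\<forall>h\<in>H'. b h - 2 * a h = f h"
    proof
      fix h assume h: "h \<in> H'"
      have "b h - 2 * a h = bc h - 2 * ac h" using a b h by (simp add: restr_def)
      also have "\<dots> = (\<Sum>g\<in>G. complex_of_real (c g) * g h)" using fun_cong[OF eq, of h] by simp
      also have "\<dots> = (\<Sum>s\<in>G0. complex_of_real (c (restr H' s)) * restr H' s h)"
        using sum.reindex[OF injG0, of "\<lambda>g. complex_of_real (c g) * g h"] imG0 by simp
      also have "\<dots> = f h" using h by (simp add: f_def restr_def)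
      finally show "b h - 2 * a h = f h" .
    qed
  qed
  moreover have "a \<in> nonisot ip R" "b \<in> nonisot ip R" using a b R'R by (auto simp: nonisot_def)
  ultimately show False using reducedR fin unfolding reduced_quot_def by metis
qed

lemma main: "eala sc Lc br B H' \<and> roots sc Lc br H' = restr H' ` R'"
  unfolding eala_def roots_c
  using lie_c ea1_c H'_Lc H'_sub H'_br H'_fin Lc_span Lc_indep Lc_E0 EA3_c[unfolded roots_c]
    disc_c conn_c nonisol_c reduced_c
  by blast

end

theorem proposition4p3:
  fixes sc :: "complex \<Rightarrow> 'v::ab_group_add \<Rightarrow> 'v"
    and L H H' :: "'v set"
    and br :: "'v \<Rightarrow> 'v \<Rightarrow> 'v"
    and B :: "'v \<Rightarrow> 'v \<Rightarrow> complex"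
    and R' :: "('v \<Rightarrow> complex) set"
  assumes "vector_space sc"
    and "eala sc L br B H"
    and "closed_subsystem sc L br B H R'"
    and "is_cover sc B H R' H'"
  shows "eala sc (lie_cover sc L br H R' H') br B H' \<and>
         roots sc (lie_cover sc L br H R' H') br H' = restr H' ` R' \<and>
         eala sc (lie_cover sc L br H R' H) br B H \<and>
         roots sc (lie_cover sc L br H R' H) br H = R'"
proof -
  have C: "ctx sc L br B H" using assms(1,2) by (simp add: ctx_def ctx_axioms_def)
  interpret C: ctx sc L br B H by (rule C)
  have CC: "cctx sc L br B H R' H'" using C assms(3,4) by (simp add: cctx_def cctx_axioms_def)
  interpret CC: cctx sc L br B H R' H' by (rule CC)
  have R'R: "R' \<subseteq> roots sc L br H" using assms(3) by (simp add: closed_subsystem_def)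
  have cov: "is_cover sc B H R' H"
    unfolding is_cover_def
  proof (intro conjI)
    show "module.subspace sc H" by (rule C.H_sub)
    show "H \<subseteq> H" by simp
    show "\<forall>a\<in>nonisot (ipf B H) R'. tvec B H a \<in> H"
    proof
      fix a assume "a \<in> nonisot (ipf B H) R'"
      then have "a \<in> hdual sc H" using R'R C.R_hdual by (auto simp: nonisot_def)
      then show "tvec B H a \<in> H" using C.tvec_H by blast
    qed
    show "\<forall>x\<in>H. (\<forall>y\<in>H. B x y = 0) \<longrightarrow> x = 0" by (rule C.H_nd)
  qed
  have CC2: "cctx sc L br B H R' H" using C assms(3) cov by (simp add: cctx_def cctx_axioms_def)
  interpret C2: cctx sc L br B H R' H by (rule CC2)
  have rr: "restr H ` R' = R'"
  proof -
    have "restr H a = a" if "a \<in> R'" for a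
      using that R'R C.R_hdual by (auto simp: restr_def fun_eq_iff hdual_def)
    then show ?thesis by (simp add: image_cong)
  qed
  show ?thesis using CC.main C2.main rr by simp
qed

end
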